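(* Under the setup in the context, assume in addition that the block GMRES residual $F_{j-1}^{(G)}$ has rank $L$. Then $\operatorname{rank}C_j=\operatorname{rank}\hat H_{jj}=\operatorname{rank}H_j-(j-1)L$.
   Context: Let $n,L\ge1$, $A\in\mathbb C^{n\times n}$, $B,X_0\in\mathbb C^{n\times L}$, $F_0=B-AX_0$, and let $F_0=V_1S_0$ be a reduced QR factorization ($V_1\in\mathbb C^{n\times L}$ with orthonormal columns, $S_0\in\mathbb C^{L\times L}$ upper triangular). Fix $j\ge2$. The block Arnoldi process (possibly with dependent basis vectors replaced by new orthonormal vectors) yields $W_k=[V_1,\dots,V_k]\in\mathbb C^{n\times kL}$ ($k\le j+1$) with orthonormal columns, $V_i\in\mathbb C^{n\times L}$, and the block Arnoldi relation $AW_j=W_{j+1}\bar H_j$, where $\bar H_j=(H_{ik})\in\mathbb C^{(j+1)L\times jL}$ has $L\times L$ blocks $H_{ik}$, is block upper Hessenberg ($H_{ik}=0$ for $i>k+1$), and each $H_{k+1,k}$ is upper triangular. For $k\le j$, $\bar H_k$ denotes the leading $(k+1)L\times kL$ submatrix of $\bar H_j$ and $H_k$ the leading $kL\times kL$ submatrix. $E^{[m]}\in\mathbb R^{mL\times L}$ denotes the first $L$ columns of $I_{mL}$. For $k\ge1$ with $\bar H_k$ of full column rank, the block GMRES iterate is $X_k^{(G)}=X_0+W_kY_k^{(G)}$, where $Y_k^{(G)}\in\mathbb C^{kL\times L}$ is the unique minimizer of $\|\bar H_kY-E^{[k+1]}S_0\|_F$ (Frobenius norm), and $F_k^{(G)}=B-AX_k^{(G)}$.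 Block QR factorization: assume $\bar H_j$ has full column rank. There are unitary matrices $\Omega_i=\begin{bmatrix}Q_i^{(11)}&Q_i^{(12)}\\Q_i^{(21)}&Q_i^{(22)}\end{bmatrix}\in\mathbb C^{2L\times 2L}$ ($i=1,\dots,j$, all four blocks $L\times L$); for $m\ge i+1$ put $Q_i^{(m)}=\mathrm{diag}(I_{(i-1)L},\Omega_i,I_{(m-i-1)L})\in\mathbb C^{mL\times mL}$ and $\bar Q_k=Q_k^{(k+1)}Q_{k-1}^{(k+1)}\cdots Q_1^{(k+1)}$. The $\Omega_i$ are chosen recursively so that $\bar Q_k\bar H_k=\begin{bmatrix}R_k\\ 0_{L\times kL}\end{bmatrix}$ with $R_k\in\mathbb C^{kL\times kL}$ upper triangular and nonsingular ($k=1,\dots,j$). In particular $Q_{j-1}^{(j+1)}\cdots Q_1^{(j+1)}\bar H_j=\begin{bmatrix}R_{j-1}&Z_j\\0&\hat H_{jj}\\0&H_{j+1,j}\end{bmatrix}$ for some $Z_j\in\mathbb C^{(j-1)L\times L}$, $\hat H_{jj}\in\mathbb C^{L\times L}$; correspondingly $Q_{j-1}^{(j)}\cdots Q_1^{(j)}H_j=\begin{bmatrix}R_{j-1}&Z_j\\0&\hat H_{jj}\end{bmatrix}$; and $\Omega_j\begin{bmatrix}\hat H_{jj}\\H_{j+1,j}\end{bmatrix}=\begin{bmatrix}N_j\\0\end{bmatrix}$ with $N_j$ upper triangular and nonsingular, so $R_j=\begin{bmatrix}R_{j-1}&Z_j\\0&N_j\end{bmatrix}$. Write $\bar Q_{j-1}E^{[j]}S_0=\begin{bmatrix}G_{j-1}\\\tilde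 C_j\end{bmatrix}$ with $G_{j-1}\in\mathbb C^{(j-1)L\times L}$, $\tilde C_j\in\mathbb C^{L\times L}$, and set $C_j=Q_j^{(11)}\tilde C_j$. *)

theory Defs
  imports Complex_Main "Jordan_Normal_Form.Schur_Decomposition" "Jordan_Normal_Form.DL_Rank"
begin

definition mrank :: "complex mat \<Rightarrow> nat" where
  "mrank M = vec_space.rank (dim_row M) M"

definition blk :: "'a mat \<Rightarrow> nat \<Rightarrow> nat \<Rightarrow> nat \<Rightarrow> nat \<Rightarrow> 'a mat" where
  "blk M r0 c0 nr nc = mat nr nc (\<lambda>(i,k). M $$ (r0 + i, c0 + k))"

(* L x L block (i,k) (1-based block indices) of a block matrix *)
definition hblock :: "'a mat \<Rightarrow> nat \<Rightarrow> nat \<Rightarrow> nat \<Rightarrow> 'a mat" where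
  "hblock M L i k = blk M ((i - 1) * L) ((k - 1) * L) L L"

definition orthonormal_cols :: "complex mat \<Rightarrow> bool" where
  "orthonormal_cols W \<longleftrightarrow> mat_adjoint W * W = 1\<^sub>m (dim_col W)"

definition unitary_mat :: "complex mat \<Rightarrow> bool" where
  "unitary_mat U \<longleftrightarrow> square_mat U \<and> mat_adjoint U * U = 1\<^sub>m (dim_col U)
                       \<and> U * mat_adjoint U = 1\<^sub>m (dim_row U)"

definition fro_norm :: "complex mat \<Rightarrow> real" where
  "fro_norm M = sqrt (\<Sum>i<dim_row M. \<Sum>k<dim_col M. (cmod (M $$ (i,k)))\<^sup>2)"

definition Emat :: "nat \<Rightarrow> nat \<Rightarrow> complex mat" where
  "Emat L m = blk (1\<^sub>m (m * L)) 0 0 (m * L) L"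

(* Q_i^(m) = diag(I_{(i-1)L}, Omega_i, I_{(m-i-1)L})  (for 1 <= i, i+1 <= m) *)
definition Qembed :: "(nat \<Rightarrow> complex mat) \<Rightarrow> nat \<Rightarrow> nat \<Rightarrow> nat \<Rightarrow> complex mat" where
  "Qembed Om L i m = mat (m * L) (m * L) (\<lambda>(r,c).
     if (i - 1) * L \<le> r \<and> r < (i + 1) * L \<and> (i - 1) * L \<le> c \<and> c < (i + 1) * L
     then Om i $$ (r - (i - 1) * L, c - (i - 1) * L)
     else if r = c then 1 else 0)"

fun Qprod :: "(nat \<Rightarrow> complex mat) \<Rightarrow> nat \<Rightarrow> nat \<Rightarrow> nat \<Rightarrow> complex mat" where
  "Qprod Om L 0 m = 1\<^sub>m (m * L)"
| "Qprod Om L (Suc k) m = Qembed Om L (Suc k) m * Qprod Om L k m"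

end

theory Submission
  imports Defs
begin


definition inj_mat :: "'a::field mat \<Rightarrow> bool" where
  "inj_mat M \<longleftrightarrow> (\<forall>v\<in>carrier_vec (dim_col M). M *\<^sub>v v = 0\<^sub>v (dim_row M) \<longrightarrow> v = 0\<^sub>v (dim_col M))"

lemma det_nz_inv:
  assumes A: "(A::'a::field mat) \<in> carrier_mat n n" and d: "det A \<noteq> 0"
  shows "\<exists>B\<in>carrier_mat n n. A * B = 1\<^sub>m n \<and> B * A = 1\<^sub>m n"
  using det_non_zero_imp_unit[OF A d, of "()"] unfolding Units_def ring_mat_def by auto

lemma mult_unit_vec_col:
  assumes A: "(A::'a::comm_ring_1 mat) \<in> carrier_mat nr nc" and i: "i < nc"
  shows "A *\<^sub>v unit_vec nc i = col A i"
proof (rule eq_vecI)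
  fix r assume "r < dim_vec (col A i)"
  then have r: "r < nr" using A by auto
  have "(A *\<^sub>v unit_vec nc i) $ r = (\<Sum>k<nc. A $$ (r,k) * unit_vec nc i $ k)"
    using A r unfolding mult_mat_vec_def scalar_prod_def by (auto simp: atLeast0LessThan)
  also have "\<dots> = (\<Sum>k<nc. if k = i then A $$ (r,k) else 0)"
    by (rule sum.cong) (auto simp: unit_vec_def)
  also have "\<dots> = A $$ (r,i)" using i by simp
  finally show "(A *\<^sub>v unit_vec nc i) $ r = col A i $ r" using A r i by auto
qed (insert A, auto)

context vec_space begin

lemma rank_mono_span:
  assumes A: "A \<in> carrier_mat n nc" and B: "B \<in> carrier_mat n nc'"
    and sub: "set (cols B) \<subseteq> span (set (cols A))"
  shows "rank B \<le> rank A"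
proof -
  define W where "W = span (set (cols A))"
  have sW: "VectorSpace.subspace class_ring W V"
    unfolding W_def using A cols_dim carrier_matD(1) span_is_subspace by (metis List.finite_set)
  have "span (set (cols B)) \<subseteq> W"
    unfolding W_def using sub A cols_dim
    by (metis carrier_matD(1) span_is_submodule span_is_subset)
  have sB: "VectorSpace.subspace class_ring (span (set (cols B))) V" using B cols_dim carrier_matD(1) span_is_subspace
    by (metis List.finite_set)
  have subspace: "VectorSpace.subspace class_ring (span (set (cols B))) (vs W)"
    using nested_subspaces[OF sW sB \<open>span (set (cols B)) \<subseteq> W\<close>] .
  have fW: "vectorspace.fin_dim class_ring (vs W)" unfolding W_def using A fin_dim_span_cols by blast
  have fB: "vectorspace.fin_dim class_ring (span_vs (set (cols B)))" using B fin_dim_span_cols by blast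
  have "rank B \<le> vectorspace.dim class_ring (vs W)" unfolding rank_def
    using vectorspace.subspace_dim[OF subspace_is_vs[OF sW] subspace fW] fB by auto
  also have "\<dots> = rank A" unfolding rank_def W_def by simp
  finally show ?thesis .
qed

lemma inj_rank_full:
  assumes B: "B \<in> carrier_mat n k" and inj: "inj_mat B"
  shows "rank B = k"
proof -
  have d: "distinct (cols B)"
  proof (rule ccontr)
    assume "\<not> distinct (cols B)"
    then obtain i j where ij: "i \<noteq> j" "cols B ! i = cols B ! j" "i < length (cols B)" "j < length (cols B)"
      using distinct_conv_nth by blast
    then have c: "col B i = col B j" "i < k" "j < k" using B by auto
    define v where "v = (unit_vec k i - unit_vec k j :: 'a vec)"
    have v: "v \<in> carrier_vec k" unfolding v_def by auto
    have "v $ i = 1" unfolding v_def using c ij by auto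
    then have "v \<noteq> 0\<^sub>v k" using c by auto
    moreover have "B *\<^sub>v v = 0\<^sub>v n"
      unfolding v_def using B c
      by (simp add: mult_minus_distrib_mat_vec mult_unit_vec_col)
    ultimately show False using inj v B unfolding inj_mat_def by auto
  qed
  have "lin_indpt (set (cols B))"
  proof
    assume "lin_dep (set (cols B))"
    then obtain v where "v \<in> carrier_vec k" "v \<noteq> 0\<^sub>v k" "B *\<^sub>v v = 0\<^sub>v n"
      using lin_depE[OF B _ d] by blast
    then show False using inj B unfolding inj_mat_def by auto
  qed
  then show ?thesis using lin_indpt_full_rank[OF B d] by blast
qed

lemma rank_ge_inj:
  assumes A: "A \<in> carrier_mat n nc" and N: "N \<in> carrier_mat nc k" and inj: "inj_mat (A * N)"
  shows "k \<le> rank A"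
proof -
  have AN: "A * N \<in> carrier_mat n k" using A N by auto
  have "rank (A * N) = k" using inj_rank_full[OF AN inj] .
  moreover have "set (cols (A * N)) \<subseteq> span (set (cols A))"
  proof
    fix x assume "x \<in> set (cols (A * N))"
    then obtain i where i: "i < k" "x = col (A * N) i" using AN
      by (metis cols_length cols_nth carrier_matD(2) in_set_conv_nth)
    then have "x = A *\<^sub>v col N i" using A N by auto
    then show "x \<in> span (set (cols A))"
      using col_space_eq[OF A] A N i unfolding col_space_def by auto
  qed
  ultimately show ?thesis using rank_mono_span[OF A AN] by auto
qed

lemma rank_inj_exists:
  assumes A: "A \<in> carrier_mat n nc"
  shows "\<exists>N\<in>carrier_mat nc (rank A). inj_mat (A * N)"
proof -
  obtain S where S: "maximal S (\<lambda>T. T \<subseteq> set (cols A) \<and> lin_indpt T)"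
    using maximal_exists[of "(\<lambda>T. T \<subseteq> set (cols A) \<and> lin_indpt T)" "card (set (cols A))" "{}"]
    by (meson List.finite_set card_mono empty_iff empty_subsetI finite_lin_indpt2 rev_finite_subset)
  have rk: "rank A = card S" using rank_card_indpt[OF A S] .
  have Ssub: "S \<subseteq> set (cols A)" and Sli: "lin_indpt S" using S unfolding maximal_def by auto
  have "finite S" using Ssub finite_subset by blast
  then obtain xs where xs: "set xs = S" "distinct xs" using finite_distinct_list by blast
  have lxs: "length xs = rank A" using rk xs distinct_card by fastforce
  define idx where "idx x = (SOME i. i < nc \<and> x = col A i)" for x
  have idx: "idx x < nc \<and> x = col A (idx x)" if "x \<in> S" for x
  proof -
    from that Ssub obtain i where "i < nc" "x = col A i" using A
      by (metis cols_length cols_nth carrier_matD(2) in_set_conv_nth subsetD)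
    then have "\<exists>i. i < nc \<and> x = col A i" by blast
    from someI_ex[OF this] show ?thesis unfolding idx_def .
  qed
  define N where "N = (mat nc (length xs) (\<lambda>(r,c). if r = idx (xs ! c) then 1 else 0) :: 'a mat)"
  have N: "N \<in> carrier_mat nc (rank A)" unfolding N_def lxs[symmetric] by auto
  have colN: "col N c = unit_vec nc (idx (xs ! c))" if "c < length xs" for c
    using that unfolding N_def by (intro eq_vecI, auto simp: unit_vec_def)
  have AN: "A * N \<in> carrier_mat n (length xs)" using A N lxs by auto
  have colAN: "col (A * N) c = xs ! c" if c: "c < length xs" for c
  proof -
    have "xs ! c \<in> S" using c xs by auto
    then have i: "idx (xs ! c) < nc" and x: "xs ! c = col A (idx (xs ! c))" using idx by auto
    have cr: "c < rank A" using c lxs by simp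
    have "col (A * N) c = A *\<^sub>v col N c" by (rule col_mult2[OF A N cr])
    also have "\<dots> = A *\<^sub>v unit_vec nc (idx (xs ! c))" using colN[OF c] by simp
    also have "\<dots> = col A (idx (xs ! c))" by (rule mult_unit_vec_col[OF A i])
    finally show ?thesis using x by simp
  qed
  have colsAN: "cols (A * N) = xs"
    by (rule nth_equalityI, insert AN colAN, auto)
  have "inj_mat (A * N)"
    unfolding inj_mat_def
  proof (intro ballI impI, rule ccontr)
    fix v assume v: "v \<in> carrier_vec (dim_col (A * N))" "A * N *\<^sub>v v = 0\<^sub>v (dim_row (A * N))"
      "v \<noteq> 0\<^sub>v (dim_col (A * N))"
    have "lin_dep (set (cols (A * N)))"
      using lin_depI[OF AN _ _ _ ] v AN colsAN xs by auto
    then show False using Sli colsAN xs by simp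
  qed
  then show ?thesis using N by blast
qed

end



lemma adj_carrier[simp]: "mat_adjoint (A::complex mat) \<in> carrier_mat (dim_col A) (dim_row A)"
  unfolding mat_adjoint_def by auto
lemma adj_dims[simp]: "dim_row (mat_adjoint (A::complex mat)) = dim_col A"
  "dim_col (mat_adjoint (A::complex mat)) = dim_row A"
  unfolding mat_adjoint_def by auto
lemma adj_index[simp]: "i < dim_col A \<Longrightarrow> k < dim_row A \<Longrightarrow> mat_adjoint (A::complex mat) $$ (i,k) = cnj (A $$ (k,i))"
  unfolding mat_adjoint_def by (simp add: mat_of_rows_index)
lemma adj_adj[simp]: "mat_adjoint (mat_adjoint (A::complex mat)) = A"
  by (rule eq_matI, auto)

lemma adj_range_inj:
  assumes A: "(A::complex mat) \<in> carrier_mat nr nc" and v: "v \<in> carrier_vec nc"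
    and z: "mat_adjoint A *\<^sub>v (A *\<^sub>v v) = 0\<^sub>v nc"
  shows "A *\<^sub>v v = 0\<^sub>v nr"
proof -
  define w where "w = A *\<^sub>v v"
  have w: "w \<in> carrier_vec nr" unfolding w_def using A v mult_mat_vec_carrier by blast
  have wk: "w $ k = (\<Sum>i<nc. A $$ (k,i) * v $ i)" if "k < nr" for k
    unfolding w_def using A v that by (auto simp: mult_mat_vec_def scalar_prod_def atLeast0LessThan)
  have ai: "(\<Sum>k<nr. cnj (A $$ (k,i)) * w $ k) = 0" if "i < nc" for i
  proof -
    have "(mat_adjoint A *\<^sub>v w) $ i = 0" using z that unfolding w_def by auto
    then show ?thesis using A that w by (auto simp: mult_mat_vec_def scalar_prod_def atLeast0LessThan)
  qed
  have "(\<Sum>k<nr. w $ k * cnj (w $ k)) = (\<Sum>k<nr. \<Sum>i<nc. A $$ (k,i) * v $ i * cnj (w $ k))"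
  proof (rule sum.cong[OF refl])
    fix k assume "k \<in> {..<nr}"
    then show "w $ k * cnj (w $ k) = (\<Sum>i<nc. A $$ (k,i) * v $ i * cnj (w $ k))"
      using wk[of k] by (simp add: sum_distrib_right)
  qed
  also have "\<dots> = (\<Sum>i<nc. \<Sum>k<nr. A $$ (k,i) * v $ i * cnj (w $ k))" by (rule sum.swap)
  also have "\<dots> = (\<Sum>i<nc. v $ i * cnj (\<Sum>k<nr. cnj (A $$ (k,i)) * w $ k))"
  proof (rule sum.cong[OF refl])
    fix i assume "i \<in> {..<nc}"
    have "v $ i * cnj (\<Sum>k<nr. cnj (A $$ (k,i)) * w $ k) = v $ i * (\<Sum>k<nr. A $$ (k,i) * cnj (w $ k))"
      by (simp add: cnj_sum)
    also have "\<dots> = (\<Sum>k<nr. A $$ (k,i) * v $ i * cnj (w $ k))"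
      by (simp add: sum_distrib_left mult.assoc mult.left_commute)
    finally show "(\<Sum>k<nr. A $$ (k,i) * v $ i * cnj (w $ k)) = v $ i * cnj (\<Sum>k<nr. cnj (A $$ (k,i)) * w $ k)" by simp
  qed
  also have "\<dots> = 0" using ai by simp
  finally have "w \<bullet>c w = 0" using w by (simp add: scalar_prod_def atLeast0LessThan)
  then show ?thesis using w conjugate_square_eq_0_vec[OF w] unfolding w_def by simp
qed

lemma mat_vec_zero[simp]: "A \<in> carrier_mat nr nc \<Longrightarrow> A *\<^sub>v 0\<^sub>v nc = 0\<^sub>v nr"
  by (intro eq_vecI) (auto simp: mult_mat_vec_def scalar_prod_def)

lemma mrank_ge_inj:
  assumes A: "A \<in> carrier_mat nr nc" and N: "N \<in> carrier_mat nc k" and inj: "inj_mat (A * N)"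
  shows "k \<le> mrank A"
  unfolding mrank_def using vec_space.rank_ge_inj[OF _ N inj] A by auto

lemma mrank_inj_exists:
  assumes A: "A \<in> carrier_mat nr nc"
  shows "\<exists>N\<in>carrier_mat nc (mrank A). inj_mat (A * N)"
  unfolding mrank_def using vec_space.rank_inj_exists[of A "dim_row A" nc] A by auto

lemma mrank_le_cols: "A \<in> carrier_mat nr nc \<Longrightarrow> mrank A \<le> nc"
  unfolding mrank_def using vec_space.rank_le_nc by auto

lemma mrank_mult_le_left:
  assumes A: "A \<in> carrier_mat nr m" and B: "B \<in> carrier_mat m nc"
  shows "mrank (A * B) \<le> mrank A"
proof -
  obtain N where N: "N \<in> carrier_mat nc (mrank (A*B))" "inj_mat (A * B * N)"
    using mrank_inj_exists[of "A*B" nr nc] A B by auto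
  have "A * B * N = A * (B * N)" using A B N by auto
  then show ?thesis using mrank_ge_inj[OF A, of "B * N"] B N by auto
qed

lemma mrank_mult_ge:
  assumes A: "A \<in> carrier_mat nr m" and B: "B \<in> carrier_mat m nc"
    and h: "\<And>v. v \<in> carrier_vec nc \<Longrightarrow> A *\<^sub>v (B *\<^sub>v v) = 0\<^sub>v nr \<Longrightarrow> B *\<^sub>v v = 0\<^sub>v m"
  shows "mrank B \<le> mrank (A * B)"
proof -
  obtain N where N: "N \<in> carrier_mat nc (mrank B)" "inj_mat (B * N)"
    using mrank_inj_exists[OF B] by blast
  have AB: "A * B \<in> carrier_mat nr nc" using A B by (rule mult_carrier_mat)
  have BN: "B * N \<in> carrier_mat m (mrank B)" using B N(1) by (rule mult_carrier_mat)
  have ABN: "A * B * N \<in> carrier_mat nr (mrank B)" using AB N(1) by (rule mult_carrier_mat)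
  have "inj_mat (A * B * N)"
    unfolding inj_mat_def
  proof (intro ballI impI)
    fix v assume v: "v \<in> carrier_vec (dim_col (A * B * N))" "A * B * N *\<^sub>v v = 0\<^sub>v (dim_row (A * B * N))"
    have vv: "v \<in> carrier_vec (mrank B)" using v(1) N(1) by simp
    have Nv: "N *\<^sub>v v \<in> carrier_vec nc" using N(1) vv by (rule mult_mat_vec_carrier)
    have e1: "A * B * N *\<^sub>v v = A *\<^sub>v (B *\<^sub>v (N *\<^sub>v v))"
      using assoc_mult_mat_vec[OF AB N(1) vv] assoc_mult_mat_vec[OF A B Nv] by simp
    have "A *\<^sub>v (B *\<^sub>v (N *\<^sub>v v)) = 0\<^sub>v nr" using v(2) e1 carrier_matD[OF ABN] carrier_matD[OF A] by simp
    then have "B *\<^sub>v (N *\<^sub>v v) = 0\<^sub>v m" by (rule h[OF Nv])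
    then have "B * N *\<^sub>v v = 0\<^sub>v (dim_row (B * N))" using assoc_mult_mat_vec[OF B N(1) vv] carrier_matD[OF B] carrier_matD[OF BN] by simp
    then show "v = 0\<^sub>v (dim_col (A * B * N))" using N(2) vv BN ABN carrier_matD[OF N(1)] unfolding inj_mat_def by simp
  qed
  then show ?thesis using mrank_ge_inj[OF AB N(1)] by blast
qed

lemma mrank_mult_le_right:
  assumes A: "A \<in> carrier_mat nr m" and B: "B \<in> carrier_mat m nc"
  shows "mrank (A * B) \<le> mrank B"
proof -
  have AB: "A * B \<in> carrier_mat nr nc" using A B by (rule mult_carrier_mat)
  obtain N where N: "N \<in> carrier_mat nc (mrank (A*B))" "inj_mat (A * B * N)"
    using mrank_inj_exists[OF AB] by blast
  have BN: "B * N \<in> carrier_mat m (mrank (A*B))" using B N(1) by (rule mult_carrier_mat)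
  have ABN: "A * B * N \<in> carrier_mat nr (mrank (A*B))" using AB N(1) by (rule mult_carrier_mat)
  have "inj_mat (B * N)"
    unfolding inj_mat_def
  proof (intro ballI impI)
    fix v assume v: "v \<in> carrier_vec (dim_col (B * N))" "B * N *\<^sub>v v = 0\<^sub>v (dim_row (B * N))"
    have vv: "v \<in> carrier_vec (mrank (A*B))" using v(1) N(1) by simp
    have "A * B * N = A * (B * N)" using A B N(1) by (rule assoc_mult_mat)
    then have "A * B * N *\<^sub>v v = A *\<^sub>v (B * N *\<^sub>v v)" using assoc_mult_mat_vec[OF A BN vv] by simp
    also have "\<dots> = 0\<^sub>v nr" using v(2) carrier_matD[OF BN] A by simp
    finally show "v = 0\<^sub>v (dim_col (B * N))" using N(2) vv carrier_matD[OF ABN] carrier_matD[OF BN] carrier_matD[OF A] carrier_matD[OF B] carrier_matD[OF N(1)] unfolding inj_mat_def by simp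
  qed
  then show ?thesis using mrank_ge_inj[OF B N(1)] by blast
qed

lemma mrank_left_inv:
  assumes A: "A \<in> carrier_mat nr m" and X: "X \<in> carrier_mat m nc" and P: "P \<in> carrier_mat m nr"
    and PA: "P * A = 1\<^sub>m m"
  shows "mrank (A * X) = mrank X"
proof -
  have AX: "A * X \<in> carrier_mat nr nc" using A X by (rule mult_carrier_mat)
  have "P * (A * X) = P * A * X" using P A X by (simp add: assoc_mult_mat)
  also have "\<dots> = X" using PA X by simp
  finally have e: "P * (A * X) = X" .
  have "mrank (P * (A * X)) \<le> mrank (A * X)" by (rule mrank_mult_le_right[OF P AX])
  then have "mrank X \<le> mrank (A * X)" using e by simp
  moreover have "mrank (A * X) \<le> mrank X" by (rule mrank_mult_le_right[OF A X])
  ultimately show ?thesis by simp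
qed

lemma mrank_right_inv:
  assumes X: "X \<in> carrier_mat nr nc" and N: "N \<in> carrier_mat nc nc" and N': "N' \<in> carrier_mat nc nc"
    and NN: "N * N' = 1\<^sub>m nc"
  shows "mrank (X * N) = mrank X"
proof -
  have XN: "X * N \<in> carrier_mat nr nc" using X N by (rule mult_carrier_mat)
  have "X * N * N' = X * (N * N')" using X N N' by (rule assoc_mult_mat)
  also have "\<dots> = X" using NN X by simp
  finally have e: "X * N * N' = X" .
  have "mrank (X * N * N') \<le> mrank (X * N)" by (rule mrank_mult_le_left[OF XN N'])
  then have "mrank X \<le> mrank (X * N)" using e by simp
  moreover have "mrank (X * N) \<le> mrank X" by (rule mrank_mult_le_left[OF X N])
  ultimately show ?thesis by simp
qed

lemma mrank_adj_le:
  assumes X: "(X::complex mat) \<in> carrier_mat nr nc"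
  shows "mrank X \<le> mrank (mat_adjoint X)"
proof -
  have XH: "mat_adjoint X \<in> carrier_mat nc nr" using adj_carrier[of X] X by simp
  have "mrank X \<le> mrank (mat_adjoint X * X)"
    by (rule mrank_mult_ge[OF XH X], rule adj_range_inj[OF X])
  also have "\<dots> \<le> mrank (mat_adjoint X)" by (rule mrank_mult_le_left[OF XH X])
  finally show ?thesis .
qed

lemma mrank_adj: "mrank (mat_adjoint (X::complex mat)) = mrank X"
proof -
  have "mrank X \<le> mrank (mat_adjoint X)" by (rule mrank_adj_le, rule carrier_matI, auto)
  moreover have "mrank (mat_adjoint X) \<le> mrank (mat_adjoint (mat_adjoint X))" by (rule mrank_adj_le, rule carrier_matI, auto)
  ultimately show ?thesis by simp
qed

lemma mrank_full_inj:
  assumes A: "A \<in> carrier_mat nr nc" and r: "mrank A = nc"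
  shows "inj_mat A"
proof -
  obtain N where N: "N \<in> carrier_mat nc nc" "inj_mat (A * N)" using mrank_inj_exists[OF A] r by auto
  have AN: "A * N \<in> carrier_mat nr nc" using A N(1) by (rule mult_carrier_mat)
  have "det N \<noteq> 0"
  proof
    assume "det N = 0"
    then obtain v where v: "v \<in> carrier_vec nc" "v \<noteq> 0\<^sub>v nc" "N *\<^sub>v v = 0\<^sub>v nc"
      using det_0_iff_vec_prod_zero_field[OF N(1)] by blast
    have "A * N *\<^sub>v v = A *\<^sub>v (N *\<^sub>v v)" by (rule assoc_mult_mat_vec[OF A N(1) v(1)])
    also have "\<dots> = 0\<^sub>v nr" using v(3) A by simp
    finally show False using N(2) v carrier_matD[OF AN] carrier_matD[OF N(1)] carrier_matD[OF A] unfolding inj_mat_def by auto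
  qed
  then obtain N' where N': "N' \<in> carrier_mat nc nc" "N * N' = 1\<^sub>m nc" using det_nz_inv[OF N(1)] by blast
  show ?thesis unfolding inj_mat_def
  proof (intro ballI impI)
    fix v assume v: "v \<in> carrier_vec (dim_col A)" "A *\<^sub>v v = 0\<^sub>v (dim_row A)"
    have vv: "v \<in> carrier_vec nc" using v A by simp
    have N'v: "N' *\<^sub>v v \<in> carrier_vec nc" using N'(1) vv by (rule mult_mat_vec_carrier)
    have e: "N *\<^sub>v (N' *\<^sub>v v) = v" using assoc_mult_mat_vec[OF N(1) N'(1) vv, symmetric] N'(2) vv by simp
    have "A * N *\<^sub>v (N' *\<^sub>v v) = A *\<^sub>v (N *\<^sub>v (N' *\<^sub>v v))" by (rule assoc_mult_mat_vec[OF A N(1) N'v])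
    also have "\<dots> = 0\<^sub>v nr" using e v A by simp
    finally have "N' *\<^sub>v v = 0\<^sub>v nc" using N(2) N'v carrier_matD[OF AN] carrier_matD[OF A] carrier_matD[OF N(1)] unfolding inj_mat_def by simp
    then show "v = 0\<^sub>v (dim_col A)" using e N(1) A by simp
  qed
qed



lemma blk_index[simp]: "i < nr \<Longrightarrow> k < nc \<Longrightarrow> blk M r0 c0 nr nc $$ (i,k) = M $$ (r0+i, c0+k)"
  unfolding blk_def by simp
lemma blk_dims[simp]: "dim_row (blk M r0 c0 nr nc) = nr" "dim_col (blk M r0 c0 nr nc) = nc"
  unfolding blk_def by simp_all
lemma blk_carrier[simp]: "blk M r0 c0 nr nc \<in> carrier_mat nr nc"
  unfolding blk_def by simp

lemma mult_index_sum:
  assumes A: "A \<in> carrier_mat nr m" and B: "B \<in> carrier_mat m nc" and "i < nr" "j < nc"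
  shows "(A * B) $$ (i,j) = (\<Sum>s<m. A $$ (i,s) * B $$ (s,j))"
  using assms by (simp add: scalar_prod_def atLeast0LessThan)

lemma sum_delta_l[simp]: "(\<Sum>s<(n::nat). (if s = a then 1 else 0) * (f s :: 'a :: comm_ring_1)) = (if a < n then f a else 0)"
proof -
  have "(\<Sum>s<n. (if s = a then 1 else 0) * f s) = (\<Sum>s<n. if s = a then f s else 0)"
    by (rule sum.cong) auto
  also have "\<dots> = (if a < n then f a else 0)" by (subst sum.delta) auto
  finally show ?thesis .
qed
lemma sum_delta_r[simp]: "(\<Sum>s<(n::nat). (f s :: 'a :: comm_ring_1) * (if s = a then 1 else 0)) = (if a < n then f a else 0)"
proof -
  have "(\<Sum>s<n. f s * (if s = a then 1 else 0)) = (\<Sum>s<n. if s = a then f s else 0)"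
    by (rule sum.cong) auto
  also have "\<dots> = (if a < n then f a else 0)" by (subst sum.delta) auto
  finally show ?thesis .
qed
lemma mrank_subadd:
  assumes "A \<in> carrier_mat nr nc" "B \<in> carrier_mat nr nc"
  shows "mrank (A + B) \<le> mrank A + mrank B"
  unfolding mrank_def using vec_space.rank_subadditive[OF assms] assms by simp

lemma zero_vec_append: "0\<^sub>v (a + b) = (0\<^sub>v a @\<^sub>v 0\<^sub>v b :: 'a::zero vec)"
  by (intro eq_vecI) auto

lemma zero_mat_vec: "v \<in> carrier_vec nc \<Longrightarrow> 0\<^sub>m nr nc *\<^sub>v v = (0\<^sub>v nr :: 'a::semiring_0 vec)"
  by (intro eq_vecI) (auto simp: scalar_prod_def)

lemma det_nz_inj:
  assumes R: "(R::'a::field mat) \<in> carrier_mat n n" and d: "det R \<noteq> 0" and v: "v \<in> carrier_vec n"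
    and z: "R *\<^sub>v v = 0\<^sub>v n"
  shows "v = 0\<^sub>v n"
  using det_0_iff_vec_prod_zero_field[OF R] d v z by blast

lemma mrank_block_ut:
  fixes T :: "complex mat"
  assumes T: "T \<in> carrier_mat (p+l) (p+l)" and dR: "det (blk T 0 0 p p) \<noteq> 0"
    and z: "blk T p 0 l p = 0\<^sub>m l p"
  shows "mrank T = p + mrank (blk T p p l l)"
proof -
  define R where "R = blk T 0 0 p p"
  define Z where "Z = blk T 0 p p l"
  define H where "H = blk T p p l l"
  have R: "R \<in> carrier_mat p p" and Z: "Z \<in> carrier_mat p l" and H: "H \<in> carrier_mat l l"
    unfolding R_def Z_def H_def by auto
  have zT: "T $$ (i,k) = 0" if "p \<le> i" "i < p + l" "k < p" for i k
  proof -
    have "blk T p 0 l p $$ (i - p, k) = 0" using z that by simp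
    then show ?thesis using that by simp
  qed
  have Tfb: "T = four_block_mat R Z (0\<^sub>m l p) H"
    by (rule eq_matI, insert T zT, auto simp: R_def Z_def H_def)
  define E where "E = (mat (p+l) p (\<lambda>(i,k). if i = k then 1 else 0) :: complex mat)"
  define Tt where "Tt = blk T 0 0 p (p+l)"
  define F where "F = (mat (p+l) l (\<lambda>(i,k). if i = p + k then 1 else 0) :: complex mat)"
  define G where "G = (mat l (p+l) (\<lambda>(i,k). if k = p + i then 1 else 0) :: complex mat)"
  have E: "E \<in> carrier_mat (p+l) p" and Tt: "Tt \<in> carrier_mat p (p+l)"
    and F: "F \<in> carrier_mat (p+l) l" and G: "G \<in> carrier_mat l (p+l)"
    unfolding E_def Tt_def F_def G_def by auto
  have HG: "H * G \<in> carrier_mat l (p+l)" using H G by (rule mult_carrier_mat)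
  have HGi: "(H * G) $$ (i,k) = (if p \<le> k then H $$ (i, k - p) else 0)" if "i < l" "k < p + l" for i k
  proof -
    have "(H * G) $$ (i,k) = (\<Sum>s<l. H $$ (i,s) * G $$ (s,k))"
      using that by (simp add: mult_index_sum[OF H G])
    also have "\<dots> = (\<Sum>s<l. H $$ (i,s) * (if s = k - p then (if p \<le> k then 1 else 0) else 0))"
      by (rule sum.cong, insert that, auto simp: G_def)
    also have "\<dots> = (if p \<le> k then H $$ (i, k - p) else 0)"
      using that by (cases "p \<le> k") auto
    finally show ?thesis .
  qed
  have EF: "T = E * Tt + F * (H * G)"
  proof (rule eq_matI)
    fix i k assume ik: "i < dim_row (E * Tt + F * (H * G))" "k < dim_col (E * Tt + F * (H * G))"
    then have i: "i < p + l" and k: "k < p + l" using carrier_matD[OF F] carrier_matD[OF G] by auto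
    have e1: "(E * Tt) $$ (i,k) = (if i < p then T $$ (i,k) else 0)"
    proof -
      have "(E * Tt) $$ (i,k) = (\<Sum>s<p. E $$ (i,s) * Tt $$ (s,k))"
        using i k by (simp add: mult_index_sum[OF E Tt])
      also have "\<dots> = (\<Sum>s<p. (if s = i then 1 else 0) * T $$ (s,k))"
        by (rule sum.cong, insert i k, auto simp: E_def Tt_def)
      finally show ?thesis by simp
    qed
    have e2: "(F * (H * G)) $$ (i,k) = (if p \<le> i \<and> p \<le> k then T $$ (i,k) else 0)"
    proof -
      have "(F * (H * G)) $$ (i,k) = (\<Sum>s<l. F $$ (i,s) * (H * G) $$ (s,k))"
        using i k by (simp add: mult_index_sum[OF F HG])
      also have "\<dots> = (\<Sum>s<l. (if s = i - p then (if p \<le> i then 1 else 0) else 0) * (H * G) $$ (s,k))"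
        by (rule sum.cong, insert i k, auto simp: F_def)
      also have "\<dots> = (if p \<le> i then (H * G) $$ (i - p, k) else 0)"
        using i by (cases "p \<le> i") auto
      also have "\<dots> = (if p \<le> i \<and> p \<le> k then T $$ (i,k) else 0)"
        using i k HGi[of "i - p" k] by (auto simp: H_def)
      finally show ?thesis .
    qed
    have ET: "E * Tt \<in> carrier_mat (p+l) (p+l)" using E Tt by (rule mult_carrier_mat)
    have FHG: "F * (H * G) \<in> carrier_mat (p+l) (p+l)" using F HG by (rule mult_carrier_mat)
    have "(E * Tt + F * (H * G)) $$ (i,k) = (E * Tt) $$ (i,k) + (F * (H * G)) $$ (i,k)"
      using i k carrier_matD[OF ET] carrier_matD[OF FHG] by (simp only: index_add_mat)
    also have "\<dots> = T $$ (i,k)" unfolding e1 e2 using zT[of i k] i k by (cases "i < p"; cases "k < p") auto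
    finally show "T $$ (i,k) = (E * Tt + F * (H * G)) $$ (i,k)" by simp
  next
    show "dim_row T = dim_row (E * Tt + F * (H * G))" using carrier_matD[OF T] carrier_matD[OF F] by simp
    show "dim_col T = dim_col (E * Tt + F * (H * G))" using carrier_matD[OF T] carrier_matD[OF G] by simp
  qed
  have ET: "E * Tt \<in> carrier_mat (p+l) (p+l)" using E Tt by (rule mult_carrier_mat)
  have FHG: "F * (H * G) \<in> carrier_mat (p+l) (p+l)" using F HG by (rule mult_carrier_mat)
  have "mrank (E * Tt + F * (H * G)) \<le> mrank (E * Tt) + mrank (F * (H * G))"
    by (rule mrank_subadd[OF ET FHG])
  then have "mrank T \<le> mrank (E * Tt) + mrank (F * (H * G))" using EF by simp
  also have "\<dots> \<le> p + mrank H"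
  proof -
    have "mrank (E * Tt) \<le> mrank E" by (rule mrank_mult_le_left[OF E Tt])
    also have "\<dots> \<le> p" by (rule mrank_le_cols[OF E])
    finally have 1: "mrank (E * Tt) \<le> p" .
    have "mrank (F * (H * G)) \<le> mrank (H * G)" by (rule mrank_mult_le_right[OF F HG])
    also have "\<dots> \<le> mrank H" by (rule mrank_mult_le_left[OF H G])
    finally show ?thesis using 1 by simp
  qed
  finally have up: "mrank T \<le> p + mrank H" .
  obtain N0 where N0: "N0 \<in> carrier_mat l (mrank H)" "inj_mat (H * N0)" using mrank_inj_exists[OF H] by blast
  define r where "r = mrank H"
  have N0c: "N0 \<in> carrier_mat l r" using N0 r_def by simp
  obtain R' where R': "R' \<in> carrier_mat p p" "R * R' = 1\<^sub>m p" using det_nz_inv[OF R] dR R_def by blast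
  have ZN: "Z * N0 \<in> carrier_mat p r" using Z N0c by (rule mult_carrier_mat)
  have HN: "H * N0 \<in> carrier_mat l r" using H N0c by (rule mult_carrier_mat)
  define X where "X = - (R' * (Z * N0))"
  have X: "X \<in> carrier_mat p r" unfolding X_def using R'(1) ZN by simp
  define N' where "N' = four_block_mat (1\<^sub>m p) X (0\<^sub>m l p) N0"
  have N': "N' \<in> carrier_mat (p+l) (p+r)" unfolding N'_def using X N0c by simp
  have R'ZN: "R' * (Z * N0) \<in> carrier_mat p r" by (rule mult_carrier_mat[OF R'(1) ZN])
  have RX: "R * X = - (Z * N0)"
  proof -
    have "R * X = - (R * (R' * (Z * N0)))" unfolding X_def by (rule uminus_mult_right_mat) (simp add: carrier_matD[OF R] carrier_matD[OF R'ZN] carrier_matD[OF R'(1)])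
    also have "R * (R' * (Z * N0)) = (R * R') * (Z * N0)" by (rule assoc_mult_mat[OF R R'(1) ZN, symmetric])
    also have "\<dots> = Z * N0" unfolding R'(2) by (rule left_mult_one_mat[OF ZN])
    finally show ?thesis .
  qed
  have dR': "det R \<noteq> 0" using dR R_def by simp
  have TN: "T * N' = four_block_mat R (0\<^sub>m p r) (0\<^sub>m l p) (H * N0)"
  proof -
    have "T * N' = four_block_mat (R * 1\<^sub>m p + Z * 0\<^sub>m l p) (R * X + Z * N0)
        (0\<^sub>m l p * 1\<^sub>m p + H * 0\<^sub>m l p) (0\<^sub>m l p * X + H * N0)"
      unfolding Tfb N'_def by (rule mult_four_block_mat[OF R Z zero_carrier_mat H one_carrier_mat X zero_carrier_mat N0c])
    also have "R * 1\<^sub>m p + Z * 0\<^sub>m l p = R"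
      by (simp only: right_mult_one_mat[OF R] right_mult_zero_mat[OF Z] right_add_zero_mat[OF R])
    also have "R * X + Z * N0 = 0\<^sub>m p r" by (simp only: RX uminus_l_inv_mat[OF ZN])
    also have "0\<^sub>m l p * 1\<^sub>m p + H * 0\<^sub>m l p = 0\<^sub>m l p"
      by (simp only: left_mult_zero_mat[OF one_carrier_mat] right_mult_zero_mat[OF H] left_add_zero_mat[OF zero_carrier_mat])
    also have "0\<^sub>m l p * X + H * N0 = H * N0"
      by (simp only: left_mult_zero_mat[OF X] left_add_zero_mat[OF HN])
    finally show ?thesis .
  qed
  have TNc: "T * N' \<in> carrier_mat (p+l) (p+r)" using T N' by (rule mult_carrier_mat)
  have "inj_mat (T * N')"
    unfolding inj_mat_def
  proof (intro ballI impI)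
    fix v assume v: "v \<in> carrier_vec (dim_col (T * N'))" "T * N' *\<^sub>v v = 0\<^sub>v (dim_row (T * N'))"
    have vv: "v \<in> carrier_vec (p + r)" using v(1) carrier_matD(2)[OF TNc] by simp
    define a where "a = vec_first v p"
    define b where "b = vec_last v r"
    have a: "a \<in> carrier_vec p" and b: "b \<in> carrier_vec r" unfolding a_def b_def by auto
    have vab: "v = a @\<^sub>v b" unfolding a_def b_def using vv by simp
    have Ra: "R *\<^sub>v a \<in> carrier_vec p" by (rule mult_mat_vec_carrier[OF R a])
    have HNb: "H * N0 *\<^sub>v b \<in> carrier_vec l" by (rule mult_mat_vec_carrier[OF HN b])
    have "T * N' *\<^sub>v v = (R *\<^sub>v a + 0\<^sub>m p r *\<^sub>v b) @\<^sub>v (0\<^sub>m l p *\<^sub>v a + H * N0 *\<^sub>v b)"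
      unfolding TN vab by (rule four_block_mat_mult_vec[OF R zero_carrier_mat zero_carrier_mat HN a b])
    also have "0\<^sub>m p r *\<^sub>v b = 0\<^sub>v p" by (rule zero_mat_vec[OF b])
    also have "0\<^sub>m l p *\<^sub>v a = 0\<^sub>v l" by (rule zero_mat_vec[OF a])
    also have "R *\<^sub>v a + 0\<^sub>v p = R *\<^sub>v a" by (rule right_zero_vec[OF Ra])
    also have "0\<^sub>v l + H * N0 *\<^sub>v b = H * N0 *\<^sub>v b" by (rule left_zero_vec[OF HNb])
    finally have "T * N' *\<^sub>v v = (R *\<^sub>v a) @\<^sub>v (H * N0 *\<^sub>v b)" .
    then have "(R *\<^sub>v a) @\<^sub>v (H * N0 *\<^sub>v b) = 0\<^sub>v (p + l)" using v(2) carrier_matD(1)[OF TNc] by simp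
    then have "(R *\<^sub>v a) @\<^sub>v (H * N0 *\<^sub>v b) = 0\<^sub>v p @\<^sub>v 0\<^sub>v l" using zero_vec_append[of p l] by (rule trans)
    then have e: "R *\<^sub>v a = 0\<^sub>v p" "H * N0 *\<^sub>v b = 0\<^sub>v l"
      using append_vec_eq[OF Ra zero_carrier_vec] by auto
    have "a = 0\<^sub>v p" by (rule det_nz_inj[OF R dR' a e(1)])
    moreover have "b = 0\<^sub>v r" using N0(2) e(2) b carrier_matD[OF HN] unfolding inj_mat_def by simp
    ultimately have "v = 0\<^sub>v p @\<^sub>v 0\<^sub>v r" using vab by simp
    also have "\<dots> = 0\<^sub>v (p + r)" by (rule zero_vec_append[symmetric])
    finally show "v = 0\<^sub>v (dim_col (T * N'))" using carrier_matD(2)[OF TNc] by simp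
  qed
  then have "p + r \<le> mrank T" by (rule mrank_ge_inj[OF T N'])
  then show ?thesis using up r_def H_def by simp
qed



definition ext :: "nat \<Rightarrow> nat \<Rightarrow> complex mat \<Rightarrow> complex mat" where
  "ext n N A = mat N N (\<lambda>(r,c). if r < n \<and> c < n then A $$ (r,c) else if r = c then 1 else 0)"

lemma ext_index[simp]: "r < N \<Longrightarrow> c < N \<Longrightarrow> ext n N A $$ (r,c) = (if r < n \<and> c < n then A $$ (r,c) else if r = c then 1 else 0)"
  unfolding ext_def by simp
lemma ext_carrier[simp]: "ext n N A \<in> carrier_mat N N" unfolding ext_def by simp
lemma ext_dims[simp]: "dim_row (ext n N A) = N" "dim_col (ext n N A) = N" unfolding ext_def by simp_all

lemma sum_split_lt:
  assumes "m \<le> (M::nat)" and "\<And>s. m \<le> s \<Longrightarrow> s < M \<Longrightarrow> f s = 0"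
  shows "(\<Sum>s<M. f s) = (\<Sum>s<m. f s)"
proof -
  have "(\<Sum>s<M. f s) = (\<Sum>s<m. f s) + (\<Sum>s\<in>{m..<M}. f s)"
    using assms(1) by (metis atLeast0LessThan sum.atLeastLessThan_concat zero_le)
  also have "(\<Sum>s\<in>{m..<M}. f s) = 0" using assms(2) by simp
  finally show ?thesis by simp
qed

lemma ext_mult:
  assumes A: "A \<in> carrier_mat n n" and B: "B \<in> carrier_mat n n" and nN: "n \<le> N"
  shows "ext n N A * ext n N B = ext n N (A * B)"
proof (rule eq_matI)
  fix r c assume rc: "r < dim_row (ext n N (A * B))" "c < dim_col (ext n N (A * B))"
  then have r: "r < N" and c: "c < N" by auto
  have "(ext n N A * ext n N B) $$ (r,c) = (\<Sum>s<N. ext n N A $$ (r,s) * ext n N B $$ (s,c))"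
    by (rule mult_index_sum[OF ext_carrier ext_carrier r c])
  also have "\<dots> = ext n N (A * B) $$ (r,c)"
  proof (cases "r < n")
    case True
    note rT = True
    show ?thesis
    proof (cases "c < n")
      case True
      have "(\<Sum>s<N. ext n N A $$ (r,s) * ext n N B $$ (s,c)) = (\<Sum>s<n. ext n N A $$ (r,s) * ext n N B $$ (s,c))"
        by (rule sum_split_lt[OF nN], insert rT True, auto)
      also have "\<dots> = (\<Sum>s<n. A $$ (r,s) * B $$ (s,c))"
        by (rule sum.cong, insert rT True nN, auto)
      also have "\<dots> = (A * B) $$ (r,c)" using rT True by (simp add: mult_index_sum[OF A B])
      finally show ?thesis using rT True r c by simp
    next
      case False
      have "(\<Sum>s<N. ext n N A $$ (r,s) * ext n N B $$ (s,c)) = (\<Sum>s<N. ext n N A $$ (r,s) * (if s = c then 1 else 0))"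
        by (rule sum.cong, insert rT False c, auto)
      also have "\<dots> = ext n N A $$ (r,c)" using c by simp
      finally show ?thesis using rT False r c by simp
    qed
  next
    case False
    have "(\<Sum>s<N. ext n N A $$ (r,s) * ext n N B $$ (s,c)) = (\<Sum>s<N. (if s = r then 1 else 0) * ext n N B $$ (s,c))"
      by (rule sum.cong, insert False r, auto)
    also have "\<dots> = ext n N B $$ (r,c)" using r by simp
    finally show ?thesis using False r c by simp
  qed
  finally show "(ext n N A * ext n N B) $$ (r,c) = ext n N (A * B) $$ (r,c)" .
qed auto

lemma Qembed_carrier[simp]: "Qembed Om L i m \<in> carrier_mat (m * L) (m * L)"
  unfolding Qembed_def by simp

lemma Qembed_dims[simp]: "dim_row (Qembed Om L i m) = m * L" "dim_col (Qembed Om L i m) = m * L"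
  unfolding Qembed_def by simp_all

lemma Qembed_index:
  "r < m * L \<Longrightarrow> c < m * L \<Longrightarrow> Qembed Om L i m $$ (r,c) =
     (if (i - 1) * L \<le> r \<and> r < (i + 1) * L \<and> (i - 1) * L \<le> c \<and> c < (i + 1) * L
     then Om i $$ (r - (i - 1) * L, c - (i - 1) * L)
     else if r = c then 1 else 0)"
  unfolding Qembed_def by simp

lemma Qprod_carrier[simp]: "Qprod Om L k m \<in> carrier_mat (m * L) (m * L)"
proof (induct k)
  case 0
  then show ?case by simp
next
  case (Suc k)
  then show ?case using mult_carrier_mat[OF Qembed_carrier Suc] by simp
qed

lemma Qprod_dims[simp]: "dim_row (Qprod Om L k m) = m * L" "dim_col (Qprod Om L k m) = m * L"
  using carrier_matD[OF Qprod_carrier[of Om L k m]] by auto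

lemma Qembed_ext:
  assumes "i + 1 \<le> m" "m \<le> m'"
  shows "Qembed Om L i m' = ext (m * L) (m' * L) (Qembed Om L i m)"
proof (rule eq_matI)
  fix r c assume "r < dim_row (ext (m * L) (m' * L) (Qembed Om L i m))" "c < dim_col (ext (m * L) (m' * L) (Qembed Om L i m))"
  then have r: "r < m' * L" and c: "c < m' * L" by auto
  have le: "(i + 1) * L \<le> m * L" using mult_le_mono1[of "i+1" m L] assms by simp
  show "Qembed Om L i m' $$ (r,c) = ext (m * L) (m' * L) (Qembed Om L i m) $$ (r,c)"
    using r c le by (auto simp: Qembed_index)
qed auto

lemma Qprod_ext:
  assumes "k + 1 \<le> m" "m \<le> m'"
  shows "Qprod Om L k m' = ext (m * L) (m' * L) (Qprod Om L k m)"
  using assms(1)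
proof (induct k)
  case 0
  have ml: "m * L \<le> m' * L" using assms(2) by simp
  show ?case by (rule eq_matI, insert ml, auto)
next
  case (Suc k)
  have ml: "m * L \<le> m' * L" using assms(2) by simp
  have "Qprod Om L (Suc k) m' = Qembed Om L (Suc k) m' * Qprod Om L k m'" by simp
  also have "\<dots> = ext (m * L) (m' * L) (Qembed Om L (Suc k) m) * ext (m * L) (m' * L) (Qprod Om L k m)"
    using Suc Qembed_ext[of "Suc k" m m' Om L] assms(2) by simp
  also have "\<dots> = ext (m * L) (m' * L) (Qembed Om L (Suc k) m * Qprod Om L k m)"
    by (rule ext_mult[OF Qembed_carrier Qprod_carrier ml])
  finally show ?case by simp
qed

lemma adj_mult:
  assumes A: "(A::complex mat) \<in> carrier_mat nr n" and B: "B \<in> carrier_mat n nc"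
  shows "mat_adjoint (A * B) = mat_adjoint B * mat_adjoint A"
proof (rule eq_matI)
  have AH: "mat_adjoint A \<in> carrier_mat n nr" using adj_carrier[of A] carrier_matD[OF A] by simp
  have BH: "mat_adjoint B \<in> carrier_mat nc n" using adj_carrier[of B] carrier_matD[OF B] by simp
  have AB: "A * B \<in> carrier_mat nr nc" by (rule mult_carrier_mat[OF A B])
  fix i k assume "i < dim_row (mat_adjoint B * mat_adjoint A)" "k < dim_col (mat_adjoint B * mat_adjoint A)"
  then have i: "i < nc" and k: "k < nr" using carrier_matD[OF AH] carrier_matD[OF BH] by auto
  have "mat_adjoint (A * B) $$ (i,k) = cnj ((A * B) $$ (k,i))" using i k carrier_matD[OF AB] by simp
  also have "\<dots> = cnj (\<Sum>s<n. A $$ (k,s) * B $$ (s,i))" by (simp only: mult_index_sum[OF A B k i])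
  also have "\<dots> = (\<Sum>s<n. cnj (B $$ (s,i)) * cnj (A $$ (k,s)))" by (simp add: cnj_sum mult.commute)
  also have "\<dots> = (\<Sum>s<n. mat_adjoint B $$ (i,s) * mat_adjoint A $$ (s,k))"
  proof (rule sum.cong[OF refl])
    fix s assume "s \<in> {..<n}"
    then show "cnj (B $$ (s,i)) * cnj (A $$ (k,s)) = mat_adjoint B $$ (i,s) * mat_adjoint A $$ (s,k)"
      using i k carrier_matD[OF A] carrier_matD[OF B] by simp
  qed
  also have "\<dots> = (mat_adjoint B * mat_adjoint A) $$ (i,k)" by (simp only: mult_index_sum[OF BH AH i k])
  finally show "mat_adjoint (A * B) $$ (i,k) = (mat_adjoint B * mat_adjoint A) $$ (i,k)" .
next
  show "dim_row (mat_adjoint (A * B)) = dim_row (mat_adjoint B * mat_adjoint A)" using carrier_matD[OF A] carrier_matD[OF B] by simp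
  show "dim_col (mat_adjoint (A * B)) = dim_col (mat_adjoint B * mat_adjoint A)" using carrier_matD[OF A] carrier_matD[OF B] by simp
qed

definition isom :: "complex mat \<Rightarrow> nat \<Rightarrow> bool" where
  "isom Q n \<longleftrightarrow> Q \<in> carrier_mat n n \<and> mat_adjoint Q * Q = 1\<^sub>m n"

lemma isom_mult:
  assumes "isom A n" "isom B n"
  shows "isom (A * B) n"
proof -
  have A: "A \<in> carrier_mat n n" and B: "B \<in> carrier_mat n n" and AA: "mat_adjoint A * A = 1\<^sub>m n"
    and BB: "mat_adjoint B * B = 1\<^sub>m n" using assms unfolding isom_def by auto
  have AH: "mat_adjoint A \<in> carrier_mat n n" using adj_carrier[of A] carrier_matD[OF A] by simp
  have BH: "mat_adjoint B \<in> carrier_mat n n" using adj_carrier[of B] carrier_matD[OF B] by simp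
  have AB: "A * B \<in> carrier_mat n n" by (rule mult_carrier_mat[OF A B])
  have "mat_adjoint (A * B) * (A * B) = (mat_adjoint B * mat_adjoint A) * (A * B)" by (simp only: adj_mult[OF A B])
  also have "\<dots> = mat_adjoint B * (mat_adjoint A * (A * B))" by (rule assoc_mult_mat[OF BH AH AB])
  also have "mat_adjoint A * (A * B) = (mat_adjoint A * A) * B" by (rule assoc_mult_mat[OF AH A B, symmetric])
  also have "\<dots> = B" by (simp only: AA left_mult_one_mat[OF B])
  also have "mat_adjoint B * B = 1\<^sub>m n" by (rule BB)
  finally show ?thesis unfolding isom_def using AB by simp
qed

lemma Qembed_isom:
  assumes i1: "1 \<le> i" and im: "i + 1 \<le> m" and Om: "Om i \<in> carrier_mat (2 * L) (2 * L)"
    and OO: "mat_adjoint (Om i) * Om i = 1\<^sub>m (2 * L)"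
  shows "isom (Qembed Om L i m) (m * L)"
proof -
  let ?Q = "Qembed Om L i m"
  define off where "off = (i - 1) * L"
  define inr where "inr r \<longleftrightarrow> off \<le> r \<and> r < off + 2 * L" for r
  have io: "(i + 1) * L = off + 2 * L" unfolding off_def using i1 by (cases i) (auto simp: algebra_simps)
  have oL: "off + 2 * L \<le> m * L" unfolding io[symmetric] using mult_le_mono1[OF im] .
  have Qi: "?Q $$ (r,c) = (if inr r \<and> inr c then Om i $$ (r - off, c - off) else if r = c then 1 else 0)"
    if "r < m * L" "c < m * L" for r c
    using that io unfolding inr_def off_def by (simp add: Qembed_index)
  have Qn: "?Q $$ (s,r) = (if s = r then 1 else 0)" if "\<not> inr r" "s < m * L" "r < m * L" for s r
  proof -
    have "?Q $$ (s,r) = (if inr s \<and> inr r then Om i $$ (s - off, r - off) else if s = r then 1 else 0)"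
      by (rule Qi[OF that(2,3)])
    then show ?thesis using that(1) by simp
  qed
  have OmH: "mat_adjoint (Om i) \<in> carrier_mat (2 * L) (2 * L)" using adj_carrier[of "Om i"] carrier_matD[OF Om] by simp
  have OOi: "(\<Sum>t<2*L. cnj (Om i $$ (t,a)) * Om i $$ (t,b)) = (if a = b then 1 else 0)"
    if ab: "a < 2 * L" "b < 2 * L" for a b
  proof -
    have "(mat_adjoint (Om i) * Om i) $$ (a,b) = (\<Sum>t<2*L. mat_adjoint (Om i) $$ (a,t) * Om i $$ (t,b))"
      by (rule mult_index_sum[OF OmH Om ab])
    also have "\<dots> = (\<Sum>t<2*L. cnj (Om i $$ (t,a)) * Om i $$ (t,b))"
    proof (rule sum.cong[OF refl])
      fix t assume "t \<in> {..<2*L}"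
      then show "mat_adjoint (Om i) $$ (a,t) * Om i $$ (t,b) = cnj (Om i $$ (t,a)) * Om i $$ (t,b)"
        using ab carrier_matD[OF Om] by simp
    qed
    finally show ?thesis using OO ab by simp
  qed
  have QH: "mat_adjoint ?Q \<in> carrier_mat (m * L) (m * L)" using adj_carrier[of ?Q] by simp
  have "mat_adjoint ?Q * ?Q = 1\<^sub>m (m * L)"
  proof (rule eq_matI)
    fix r c assume "r < dim_row (1\<^sub>m (m * L))" "c < dim_col (1\<^sub>m (m * L))"
    then have r: "r < m * L" and c: "c < m * L" by auto
    have "(mat_adjoint ?Q * ?Q) $$ (r,c) = (\<Sum>s<m*L. mat_adjoint ?Q $$ (r,s) * ?Q $$ (s,c))"
      by (rule mult_index_sum[OF QH Qembed_carrier r c])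
    also have "\<dots> = (\<Sum>s<m*L. cnj (?Q $$ (s,r)) * ?Q $$ (s,c))"
    proof (rule sum.cong[OF refl])
      fix s assume "s \<in> {..<m*L}"
      then show "mat_adjoint ?Q $$ (r,s) * ?Q $$ (s,c) = cnj (?Q $$ (s,r)) * ?Q $$ (s,c)" using r by simp
    qed
    also have "\<dots> = (if r = c then 1 else 0)"
    proof (cases "inr r")
      case False
      have "(\<Sum>s<m*L. cnj (?Q $$ (s,r)) * ?Q $$ (s,c)) = (\<Sum>s<m*L. (if s = r then 1 else 0) * ?Q $$ (s,c))"
      proof (rule sum.cong[OF refl])
        fix s assume "s \<in> {..<m*L}"
        then show "cnj (?Q $$ (s,r)) * ?Q $$ (s,c) = (if s = r then 1 else 0) * ?Q $$ (s,c)"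
          using Qn[OF False _ r, of s] by simp
      qed
      also have "\<dots> = ?Q $$ (r,c)" using r by simp
      also have "\<dots> = (if r = c then 1 else 0)" using Qi[OF r c] False by simp
      finally show ?thesis .
    next
      case True
      note rT = True
      show ?thesis
      proof (cases "inr c")
        case False
        have "(\<Sum>s<m*L. cnj (?Q $$ (s,r)) * ?Q $$ (s,c)) = (\<Sum>s<m*L. cnj (?Q $$ (s,r)) * (if s = c then 1 else 0))"
        proof (rule sum.cong[OF refl])
          fix s assume "s \<in> {..<m*L}"
          then show "cnj (?Q $$ (s,r)) * ?Q $$ (s,c) = cnj (?Q $$ (s,r)) * (if s = c then 1 else 0)"
            using Qn[OF False _ c, of s] by simp
        qed
        also have "\<dots> = cnj (?Q $$ (c,r))" using c by simp
        also have "\<dots> = (if r = c then 1 else 0)" using Qi[OF c r] False rT by auto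
        finally show ?thesis .
      next
        case True
        define f where "f s = cnj (?Q $$ (s,r)) * ?Q $$ (s,c)" for s
        have sub: "{off..<off + 2*L} \<subseteq> {..<m*L}" using oL by auto
        have "(\<Sum>s<m*L. f s) = (\<Sum>s\<in>{off..<off + 2*L}. f s)"
        proof (rule sum.mono_neutral_right[OF finite_lessThan sub], intro ballI)
          fix s assume s: "s \<in> {..<m*L} - {off..<off + 2*L}"
          then have ns: "\<not> inr s" and sl: "s < m * L" unfolding inr_def by auto
          have "?Q $$ (s,r) = (if inr s \<and> inr r then Om i $$ (s - off, r - off) else if s = r then 1 else 0)"
            by (rule Qi[OF sl r])
          then have "?Q $$ (s,r) = 0" using ns rT by auto
          then show "f s = 0" unfolding f_def by simp
        qed
        also have "\<dots> = (\<Sum>s\<in>{0+off..<2*L+off}. f s)" by (simp add: add.commute)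
        also have "\<dots> = (\<Sum>t\<in>{0..<2*L}. f (t + off))" by (rule sum.shift_bounds_nat_ivl)
        also have "\<dots> = (\<Sum>t<2*L. cnj (Om i $$ (t, r - off)) * Om i $$ (t, c - off))"
          unfolding atLeast0LessThan
        proof (rule sum.cong[OF refl])
          fix t assume t: "t \<in> {..<2*L}"
          then have ti: "inr (t + off)" and tl: "t + off < m * L" using oL unfolding inr_def by auto
          have "?Q $$ (t + off, r) = Om i $$ (t, r - off)" using Qi[OF tl r] ti rT by simp
          moreover have "?Q $$ (t + off, c) = Om i $$ (t, c - off)" using Qi[OF tl c] ti True by simp
          ultimately show "f (t + off) = cnj (Om i $$ (t, r - off)) * Om i $$ (t, c - off)" unfolding f_def by simp
        qed
        also have "\<dots> = (if r - off = c - off then 1 else 0)"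
          by (rule OOi, insert rT True, auto simp: inr_def)
        also have "\<dots> = (if r = c then 1 else 0)" using rT True unfolding inr_def by auto
        finally show ?thesis unfolding f_def .
      qed
    qed
    finally show "(mat_adjoint ?Q * ?Q) $$ (r,c) = 1\<^sub>m (m * L) $$ (r,c)" using r c by simp
  qed auto
  then show ?thesis unfolding isom_def by simp
qed

lemma Qprod_isom:
  assumes "k + 1 \<le> m"
    and Om: "\<forall>i. 1 \<le> i \<and> i + 1 \<le> m \<longrightarrow> Om i \<in> carrier_mat (2 * L) (2 * L) \<and> mat_adjoint (Om i) * Om i = 1\<^sub>m (2 * L)"
  shows "isom (Qprod Om L k m) (m * L)"
  using assms(1)
proof (induct k)
  case 0
  then show ?case unfolding isom_def by (auto intro!: eq_matI)
next
  case (Suc k)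
  have "isom (Qembed Om L (Suc k) m) (m * L)"
    by (rule Qembed_isom, insert Suc(2) Om, auto)
  moreover have "isom (Qprod Om L k m) (m * L)" using Suc by simp
  ultimately show ?case using isom_mult by simp
qed



definition fsq :: "complex mat \<Rightarrow> real" where
  "fsq M = (\<Sum>i<dim_row M. \<Sum>k<dim_col M. (cmod (M $$ (i,k)))\<^sup>2)"

lemma fsq_nonneg: "0 \<le> fsq M" unfolding fsq_def by (intro sum_nonneg) auto

lemma fro_fsq: "fro_norm M = sqrt (fsq M)" unfolding fro_norm_def fsq_def by simp

lemma fro_le_iff: "fro_norm A \<le> fro_norm B \<longleftrightarrow> fsq A \<le> fsq B"
  unfolding fro_fsq by simp

lemma fsq_adj: "complex_of_real (fsq M) = (\<Sum>k<dim_col M. (mat_adjoint M * M) $$ (k,k))"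
proof -
  have "complex_of_real (fsq M) = (\<Sum>i<dim_row M. \<Sum>k<dim_col M. complex_of_real ((cmod (M $$ (i,k)))\<^sup>2))"
    unfolding fsq_def by simp
  also have "\<dots> = (\<Sum>k<dim_col M. \<Sum>i<dim_row M. complex_of_real ((cmod (M $$ (i,k)))\<^sup>2))"
    by (rule sum.swap)
  also have "\<dots> = (\<Sum>k<dim_col M. (mat_adjoint M * M) $$ (k,k))"
  proof (rule sum.cong[OF refl])
    fix k assume k: "k \<in> {..<dim_col M}"
    have MH: "mat_adjoint M \<in> carrier_mat (dim_col M) (dim_row M)" by simp
    have M: "M \<in> carrier_mat (dim_row M) (dim_col M)" by simp
    have "(mat_adjoint M * M) $$ (k,k) = (\<Sum>i<dim_row M. mat_adjoint M $$ (k,i) * M $$ (i,k))"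
      using k by (intro mult_index_sum[OF MH M]) auto
    also have "\<dots> = (\<Sum>i<dim_row M. complex_of_real ((cmod (M $$ (i,k)))\<^sup>2))"
    proof (rule sum.cong[OF refl])
      fix i assume "i \<in> {..<dim_row M}"
      then have "mat_adjoint M $$ (k,i) = cnj (M $$ (i,k))" using k by simp
      then have e: "mat_adjoint M $$ (k,i) * M $$ (i,k) = M $$ (i,k) * cnj (M $$ (i,k))" by (simp add: mult.commute)
      show "mat_adjoint M $$ (k,i) * M $$ (i,k) = complex_of_real ((cmod (M $$ (i,k)))\<^sup>2)"
        unfolding e by (rule complex_norm_square[symmetric])
    qed
    finally show "(\<Sum>i<dim_row M. complex_of_real ((cmod (M $$ (i,k)))\<^sup>2)) = (mat_adjoint M * M) $$ (k,k)" by simp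
  qed
  finally show ?thesis .
qed

lemma isom_fsq:
  assumes Q: "isom Q n" and X: "X \<in> carrier_mat n nc"
  shows "fsq (Q * X) = fsq X"
proof -
  have Qc: "Q \<in> carrier_mat n n" and QQ: "mat_adjoint Q * Q = 1\<^sub>m n" using Q unfolding isom_def by auto
  have QH: "mat_adjoint Q \<in> carrier_mat n n" using adj_carrier[of Q] carrier_matD[OF Qc] by simp
  have XH: "mat_adjoint X \<in> carrier_mat nc n" using adj_carrier[of X] carrier_matD[OF X] by simp
  have QX: "Q * X \<in> carrier_mat n nc" by (rule mult_carrier_mat[OF Qc X])
  have "mat_adjoint (Q * X) * (Q * X) = (mat_adjoint X * mat_adjoint Q) * (Q * X)" by (simp only: adj_mult[OF Qc X])
  also have "\<dots> = mat_adjoint X * (mat_adjoint Q * (Q * X))" by (rule assoc_mult_mat[OF XH QH QX])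
  also have "mat_adjoint Q * (Q * X) = (mat_adjoint Q * Q) * X" by (rule assoc_mult_mat[OF QH Qc X, symmetric])
  also have "\<dots> = X" by (simp only: QQ left_mult_one_mat[OF X])
  finally have e: "mat_adjoint (Q * X) * (Q * X) = mat_adjoint X * X" .
  have "complex_of_real (fsq (Q * X)) = complex_of_real (fsq X)"
    unfolding fsq_adj e using carrier_matD[OF QX] carrier_matD[OF X] by simp
  then show ?thesis by simp
qed

lemma ext_mult_lo:
  assumes Q: "Q \<in> carrier_mat m m" and mM: "m \<le> M" and X: "X \<in> carrier_mat M nc"
    and r: "r < m" and c: "c < nc"
  shows "(ext m M Q * X) $$ (r,c) = (\<Sum>s<m. Q $$ (r,s) * X $$ (s,c))"
proof -
  have rM: "r < M" using r mM by simp
  have "(ext m M Q * X) $$ (r,c) = (\<Sum>s<M. ext m M Q $$ (r,s) * X $$ (s,c))"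
    by (rule mult_index_sum[OF ext_carrier X rM c])
  also have "\<dots> = (\<Sum>s<m. ext m M Q $$ (r,s) * X $$ (s,c))"
    by (rule sum_split_lt[OF mM], insert r, auto)
  also have "\<dots> = (\<Sum>s<m. Q $$ (r,s) * X $$ (s,c))"
    by (rule sum.cong[OF refl], insert r mM, auto)
  finally show ?thesis .
qed

lemma ext_mult_hi:
  assumes mM: "m \<le> M" and X: "X \<in> carrier_mat M nc"
    and r: "m \<le> r" "r < M" and c: "c < nc"
  shows "(ext m M Q * X) $$ (r,c) = X $$ (r,c)"
proof -
  have "(ext m M Q * X) $$ (r,c) = (\<Sum>s<M. ext m M Q $$ (r,s) * X $$ (s,c))"
    by (rule mult_index_sum[OF ext_carrier X r(2) c])
  also have "\<dots> = (\<Sum>s<M. (if s = r then 1 else 0) * X $$ (s,c))"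
    by (rule sum.cong[OF refl], insert r, auto)
  also have "\<dots> = X $$ (r,c)" using r by simp
  finally show ?thesis .
qed

lemma Qembed_mult_index:
  assumes i1: "1 \<le> i" and im: "i + 1 \<le> m" and X: "X \<in> carrier_mat (m * L) nc"
    and r1: "(i - 1) * L \<le> r" and r2: "r < (i - 1) * L + 2 * L" and c: "c < nc"
  shows "(Qembed Om L i m * X) $$ (r,c) = (\<Sum>t<2*L. Om i $$ (r - (i - 1) * L, t) * X $$ ((i - 1) * L + t, c))"
proof -
  define off where "off = (i - 1) * L"
  have io: "(i + 1) * L = off + 2 * L" unfolding off_def using i1 by (cases i) (auto simp: algebra_simps)
  have oL: "off + 2 * L \<le> m * L" unfolding io[symmetric] using mult_le_mono1[OF im] .
  have r: "r < m * L" using r2 oL off_def by simp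
  have Qi: "Qembed Om L i m $$ (r,s) = (if off \<le> s \<and> s < off + 2 * L then Om i $$ (r - off, s - off) else 0)"
    if "s < m * L" for s
    using that r r1 r2 io unfolding off_def by (auto simp: Qembed_index)
  define f where "f s = Qembed Om L i m $$ (r,s) * X $$ (s,c)" for s
  have "(Qembed Om L i m * X) $$ (r,c) = (\<Sum>s<m*L. f s)"
    unfolding f_def by (rule mult_index_sum[OF Qembed_carrier X r c])
  also have "\<dots> = (\<Sum>s\<in>{off..<off + 2*L}. f s)"
  proof (rule sum.mono_neutral_right[OF finite_lessThan])
    show "{off..<off + 2*L} \<subseteq> {..<m*L}" using oL by auto
    show "\<forall>s\<in>{..<m*L} - {off..<off + 2*L}. f s = 0"
    proof
      fix s assume s: "s \<in> {..<m*L} - {off..<off + 2*L}"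
      then have "s < m * L" "\<not> (off \<le> s \<and> s < off + 2 * L)" by auto
      then show "f s = 0" unfolding f_def using Qi[of s] by auto
    qed
  qed
  also have "\<dots> = (\<Sum>s\<in>{0+off..<2*L+off}. f s)" by (simp add: add.commute)
  also have "\<dots> = (\<Sum>t\<in>{0..<2*L}. f (t + off))" by (rule sum.shift_bounds_nat_ivl)
  also have "\<dots> = (\<Sum>t<2*L. Om i $$ (r - off, t) * X $$ (off + t, c))"
    unfolding atLeast0LessThan
  proof (rule sum.cong[OF refl])
    fix t assume t: "t \<in> {..<2*L}"
    then have "t + off < m * L" using oL by auto
    then show "f (t + off) = Om i $$ (r - off, t) * X $$ (off + t, c)" unfolding f_def using Qi t by (simp add: add.commute)
  qed
  finally show ?thesis unfolding off_def .
qed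

lemma mat_minus_add:
  assumes "B \<in> carrier_mat nr nc" "C \<in> carrier_mat nr nc" "D \<in> carrier_mat nr nc"
  shows "B - (C + D) = (B - C) - (D :: 'a :: ab_group_add mat)"
  by (rule eq_matI, insert assms, auto simp: algebra_simps)

lemma ut_det_diag:
  assumes ut: "upper_triangular A" and A: "A \<in> carrier_mat n n" and d: "det A \<noteq> 0" and i: "i < n"
  shows "A $$ (i,i) \<noteq> 0"
proof
  assume z: "A $$ (i,i) = 0"
  have "det A = prod_list (diag_mat A)" by (rule det_upper_triangular[OF ut A])
  also have "\<dots> = (\<Prod>k = 0..<n. A $$ (k,k))" using carrier_matD[OF A] by (simp add: prod_list_diag_prod)
  also have "\<dots> = 0" using z i by (intro prod_zero) auto
  finally show False using d by simp
qed

lemma ut_det_nz: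
  assumes ut: "upper_triangular (A::'a::field mat)" and A: "A \<in> carrier_mat n n" and dg: "\<And>i. i < n \<Longrightarrow> A $$ (i,i) \<noteq> 0"
  shows "det A \<noteq> 0"
proof -
  have "det A = prod_list (diag_mat A)" by (rule det_upper_triangular[OF ut A])
  also have "\<dots> = (\<Prod>k = 0..<n. A $$ (k,k))" using carrier_matD[OF A] by (simp add: prod_list_diag_prod)
  finally show ?thesis using dg by (auto simp: prod_zero_iff)
qed



lemma blk_full: "A \<in> carrier_mat nr nc \<Longrightarrow> blk A 0 0 nr nc = A"
  by (rule eq_matI) auto

lemma mat_vec_index_sum:
  assumes "A \<in> carrier_mat nr nc" "v \<in> carrier_vec nc" "i < nr"
  shows "(A *\<^sub>v v) $ i = (\<Sum>b<nc. A $$ (i,b) * v $ b)"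
  using assms by (simp add: scalar_prod_def atLeast0LessThan)

theorem mainTheorem4:
  fixes n L j :: nat
    and A B X0 V1 S0 W Hbar Y :: "complex mat"
    and Om :: "nat \<Rightarrow> complex mat"
  assumes n_pos: "n \<ge> 1" and L_pos: "L \<ge> 1" and j_ge: "j \<ge> 2"
    and A_dim: "A \<in> carrier_mat n n"
    and B_dim: "B \<in> carrier_mat n L" and X0_dim: "X0 \<in> carrier_mat n L"
    and V1_dim: "V1 \<in> carrier_mat n L" and S0_dim: "S0 \<in> carrier_mat L L"
    and QR0: "B - A * X0 = V1 * S0"
    and V1_orth: "orthonormal_cols V1" and S0_ut: "upper_triangular S0"
    (* W = W_{j+1} = [V_1, ..., V_{j+1}] *)
    and W_dim: "W \<in> carrier_mat n ((j + 1) * L)"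
    and W_orth: "orthonormal_cols W"
    and W_first: "blk W 0 0 n L = V1"
    (* block Arnoldi relation A W_j = W_{j+1} Hbar_j *)
    and H_dim: "Hbar \<in> carrier_mat ((j + 1) * L) (j * L)"
    and arnoldi: "A * blk W 0 0 n (j * L) = W * Hbar"
    and hess: "\<forall>i k. 1 \<le> i \<and> i \<le> j + 1 \<and> 1 \<le> k \<and> k \<le> j \<and> i > k + 1
                  \<longrightarrow> hblock Hbar L i k = 0\<^sub>m L L"
    and subdiag_ut: "\<forall>k. 1 \<le> k \<and> k \<le> j \<longrightarrow> upper_triangular (hblock Hbar L (k + 1) k)"
    and H_full_rank: "mrank Hbar = j * L"
    (* block QR factorization by the unitary 2L x 2L matrices Omega_1..Omega_j *)
    and Om_unitary: "\<forall>i. 1 \<le> i \<and> i \<le> j \<longrightarrow> Om i \<in> carrier_mat (2 * L) (2 * L) \<and> unitary_mat (Om i)"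
    and QR: "\<forall>k. 1 \<le> k \<and> k \<le> j \<longrightarrow>
              (let P = Qprod Om L k (k + 1) * blk Hbar 0 0 ((k + 1) * L) (k * L)
               in upper_triangular (blk P 0 0 (k * L) (k * L))
                  \<and> det (blk P 0 0 (k * L) (k * L)) \<noteq> 0
                  \<and> blk P (k * L) 0 L (k * L) = 0\<^sub>m L (k * L))"
    (* Y = Y_{j-1}^(G), the block GMRES least squares solution *)
    and Y_dim: "Y \<in> carrier_mat ((j - 1) * L) L"
    and Y_min: "\<forall>Y' \<in> carrier_mat ((j - 1) * L) L.
                  fro_norm (blk Hbar 0 0 (j * L) ((j - 1) * L) * Y - Emat L j * S0)
                  \<le> fro_norm (blk Hbar 0 0 (j * L) ((j - 1) * L) * Y' - Emat L j * S0)"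
    (* the residual F_{j-1}^(G) = B - A X_{j-1}^(G) has rank L *)
    and F_rank: "mrank (B - A * (X0 + blk W 0 0 n ((j - 1) * L) * Y)) = L"
  shows "let Hhat = blk (Qprod Om L (j - 1) (j + 1) * Hbar) ((j - 1) * L) ((j - 1) * L) L L;
             Ctilde = blk (Qprod Om L (j - 1) j * Emat L j * S0) ((j - 1) * L) 0 L L;
             C = blk (Om j) 0 0 L L * Ctilde;
             Hj = blk Hbar 0 0 (j * L) (j * L)
         in mrank C = mrank Hhat \<and> int (mrank Hhat) = int (mrank Hj) - int ((j - 1) * L)"
proof -
  define p where "p = (j - 1) * L"
  define m where "m = j * L"
  define M where "M = (j + 1) * L"
  have mp: "m = p + L" unfolding m_def p_def using j_ge by (cases j) auto
  have Mm: "M = m + L" unfolding M_def m_def by simp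
  have pm: "p \<le> m" and mM: "m \<le> M" using mp Mm by auto
  have j1: "j - 1 + 1 = j" using j_ge by simp
  have jS: "Suc (j - 1) = j" using j_ge by simp
  define Q where "Q = Qprod Om L (j - 1) j"
  define Q' where "Q' = Qprod Om L (j - 1) (j + 1)"
  define Qe where "Qe = Qembed Om L j (j + 1)"
  define E where "E = Emat L j"
  define H1 where "H1 = blk Hbar 0 0 m p"
  define Hj where "Hj = blk Hbar 0 0 m m"
  define Hh where "Hh = blk (Q' * Hbar) p p L L"
  define QES where "QES = Q * E * S0"
  define Ct where "Ct = blk QES p 0 L L"
  define Q11 where "Q11 = blk (Om j) 0 0 L L"
  define C where "C = Q11 * Ct"
  have Qc: "Q \<in> carrier_mat m m" unfolding Q_def m_def by simp
  have Q'c: "Q' \<in> carrier_mat M M" unfolding Q'_def M_def by (rule Qprod_carrier)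
  have Qec: "Qe \<in> carrier_mat M M" unfolding Qe_def M_def by (rule Qembed_carrier)
  have Ec: "E \<in> carrier_mat m L" unfolding E_def Emat_def m_def by simp
  have H1c: "H1 \<in> carrier_mat m p" unfolding H1_def by simp
  have Hjc: "Hj \<in> carrier_mat m m" unfolding Hj_def by simp
  have Hbc: "Hbar \<in> carrier_mat M m" using H_dim unfolding M_def m_def .
  have Omc: "Om j \<in> carrier_mat (2 * L) (2 * L)" and Omu: "unitary_mat (Om j)" using Om_unitary j_ge by auto
  have OmH: "mat_adjoint (Om j) * Om j = 1\<^sub>m (2 * L)" using Omu carrier_matD[OF Omc] unfolding unitary_mat_def by simp
  have isomQ: "isom Q m"
  proof -
    have "isom (Qprod Om L (j - 1) j) (j * L)"
    proof (rule Qprod_isom)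
      show "j - 1 + 1 \<le> j" using j1 by simp
      show "\<forall>i. 1 \<le> i \<and> i + 1 \<le> j \<longrightarrow> Om i \<in> carrier_mat (2 * L) (2 * L) \<and> mat_adjoint (Om i) * Om i = 1\<^sub>m (2 * L)"
      proof (intro allI impI)
        fix i assume i: "1 \<le> i \<and> i + 1 \<le> j"
        then have "Om i \<in> carrier_mat (2 * L) (2 * L) \<and> unitary_mat (Om i)" using Om_unitary by auto
        then show "Om i \<in> carrier_mat (2 * L) (2 * L) \<and> mat_adjoint (Om i) * Om i = 1\<^sub>m (2 * L)"
          unfolding unitary_mat_def by auto
      qed
    qed
    then show ?thesis unfolding Q_def m_def .
  qed
  have QHQ: "mat_adjoint Q * Q = 1\<^sub>m m" using isomQ unfolding isom_def by simp
  have QHc: "mat_adjoint Q \<in> carrier_mat m m" using adj_carrier[of Q] carrier_matD[OF Qc] by simp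
  have Q'ext: "Q' = ext m M Q" unfolding Q'_def Q_def m_def M_def by (rule Qprod_ext) (use j1 in auto)
  have Qprj: "Qprod Om L j (j + 1) = Qe * Q'"
  proof -
    have "Qprod Om L (Suc (j - 1)) (j + 1) = Qembed Om L (Suc (j - 1)) (j + 1) * Qprod Om L (j - 1) (j + 1)"
      by (rule Qprod.simps(2))
    then show ?thesis unfolding jS Qe_def Q'_def .
  qed
  have QR1: "upper_triangular (blk (Q * H1) 0 0 p p) \<and> det (blk (Q * H1) 0 0 p p) \<noteq> 0 \<and> blk (Q * H1) p 0 L p = 0\<^sub>m L p"
  proof -
    have "1 \<le> j - 1 \<and> j - 1 \<le> j" using j_ge by simp
    then have "let P = Qprod Om L (j - 1) (j - 1 + 1) * blk Hbar 0 0 ((j - 1 + 1) * L) ((j - 1) * L)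
               in upper_triangular (blk P 0 0 ((j - 1) * L) ((j - 1) * L))
                  \<and> det (blk P 0 0 ((j - 1) * L) ((j - 1) * L)) \<noteq> 0
                  \<and> blk P ((j - 1) * L) 0 L ((j - 1) * L) = 0\<^sub>m L ((j - 1) * L)" using QR by blast
    then show ?thesis unfolding Let_def j1 Q_def H1_def p_def m_def .
  qed
  define P2 where "P2 = Qe * (Q' * Hbar)"
  have QR2: "upper_triangular (blk P2 0 0 m m) \<and> det (blk P2 0 0 m m) \<noteq> 0 \<and> blk P2 m 0 L m = 0\<^sub>m L m"
  proof -
    have "1 \<le> j \<and> j \<le> j" using j_ge by simp
    then have "let P = Qprod Om L j (j + 1) * blk Hbar 0 0 ((j + 1) * L) (j * L)
               in upper_triangular (blk P 0 0 (j * L) (j * L))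
                  \<and> det (blk P 0 0 (j * L) (j * L)) \<noteq> 0
                  \<and> blk P (j * L) 0 L (j * L) = 0\<^sub>m L (j * L)" using QR by blast
    moreover have "blk Hbar 0 0 ((j + 1) * L) (j * L) = Hbar" using blk_full[OF H_dim] .
    moreover have "Qe * Q' * Hbar = P2" unfolding P2_def using Qec Q'c Hbc by (rule assoc_mult_mat)
    ultimately show ?thesis unfolding Let_def Qprj m_def by simp
  qed
  have hz: "Hbar $$ (s,c) = 0" if s: "m \<le> s" "s < M" and c: "c < p" for s c
  proof -
    have L0: "0 < L" using L_pos by simp
    define k where "k = c div L + 1"
    have ck: "c div L < j - 1" using c L0 unfolding p_def by (simp add: div_less_iff_less_mult)
    have "1 \<le> j + 1 \<and> j + 1 \<le> j + 1 \<and> 1 \<le> k \<and> k \<le> j \<and> j + 1 > k + 1" using ck unfolding k_def by auto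
    then have "hblock Hbar L (j + 1) k = 0\<^sub>m L L" using hess by blast
    moreover have "s - m < L" "c mod L < L" using s Mm L0 by auto
    ultimately have "hblock Hbar L (j + 1) k $$ (s - m, c mod L) = 0" by simp
    then have "Hbar $$ (j * L + (s - m), c div L * L + c mod L) = 0"
      unfolding hblock_def k_def using \<open>s - m < L\<close> \<open>c mod L < L\<close> by simp
    then show ?thesis using s unfolding m_def by simp
  qed
  define T where "T = Q * Hj"
  have Tc: "T \<in> carrier_mat m m" unfolding T_def by (rule mult_carrier_mat[OF Qc Hjc])
  have Tlo: "T $$ (a,b) = (Q * H1) $$ (a,b)" if ab: "a < m" "b < p" for a b
  proof -
    have bm: "b < m" using ab pm by simp
    have "T $$ (a,b) = (\<Sum>s<m. Q $$ (a,s) * Hj $$ (s,b))" unfolding T_def by (rule mult_index_sum[OF Qc Hjc ab(1) bm])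
    also have "\<dots> = (\<Sum>s<m. Q $$ (a,s) * H1 $$ (s,b))"
      by (rule sum.cong[OF refl], insert ab bm, simp add: Hj_def H1_def)
    also have "\<dots> = (Q * H1) $$ (a,b)" by (rule mult_index_sum[OF Qc H1c ab, symmetric])
    finally show ?thesis .
  qed
  have T1: "blk T 0 0 p p = blk (Q * H1) 0 0 p p"
    by (rule eq_matI, insert Tlo pm, auto)
  have T2: "blk T p 0 L p = 0\<^sub>m L p"
  proof -
    have "blk T p 0 L p = blk (Q * H1) p 0 L p" by (rule eq_matI, insert Tlo mp, auto)
    then show ?thesis using QR1 by simp
  qed
  have T3: "Hh = blk T p p L L"
  proof (rule eq_matI)
    fix a b assume "a < dim_row (blk T p p L L)" "b < dim_col (blk T p p L L)"
    then have a: "a < L" and b: "b < L" by auto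
    have pa: "p + a < m" and pb: "p + b < m" using a b mp by auto
    have "Hh $$ (a,b) = (Q' * Hbar) $$ (p + a, p + b)" unfolding Hh_def using a b by simp
    also have "\<dots> = (\<Sum>s<m. Q $$ (p + a,s) * Hbar $$ (s,p + b))"
      unfolding Q'ext by (rule ext_mult_lo[OF Qc mM Hbc pa pb])
    also have "\<dots> = (\<Sum>s<m. Q $$ (p + a,s) * Hj $$ (s,p + b))"
      by (rule sum.cong[OF refl], insert pb, simp add: Hj_def)
    also have "\<dots> = T $$ (p + a, p + b)" unfolding T_def by (rule mult_index_sum[OF Qc Hjc pa pb, symmetric])
    finally show "Hh $$ (a,b) = blk T p p L L $$ (a,b)" using a b by simp
  qed (auto simp: Hh_def)
  have Tc': "T \<in> carrier_mat (p + L) (p + L)" using Tc mp by simp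
  have rT: "mrank T = p + mrank Hh"
    unfolding T3 by (rule mrank_block_ut[OF Tc']) (use T1 T2 QR1 in simp_all)
  have rT2: "mrank T = mrank Hj" unfolding T_def by (rule mrank_left_inv[OF Qc Hjc QHc QHQ])
  have part1: "int (mrank Hh) = int (mrank Hj) - int p" using rT rT2 by simp
  have S0c: "S0 \<in> carrier_mat L L" by (rule S0_dim)
  have ES: "E * S0 \<in> carrier_mat m L" by (rule mult_carrier_mat[OF Ec S0c])
  have QESc: "QES \<in> carrier_mat m L" unfolding QES_def by (rule mult_carrier_mat[OF mult_carrier_mat[OF Qc Ec] S0c])
  have QH1: "Q * H1 \<in> carrier_mat m p" by (rule mult_carrier_mat[OF Qc H1c])
  define R where "R = blk (Q * H1) 0 0 p p"
  have Rc: "R \<in> carrier_mat p p" unfolding R_def by simp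
  obtain R' where R': "R' \<in> carrier_mat p p" "R * R' = 1\<^sub>m p"
    using det_nz_inv[OF Rc] QR1 unfolding R_def by blast
  have QH1z: "(Q * H1) $$ (r,s) = 0" if "p \<le> r" "r < m" "s < p" for r s
  proof -
    have "blk (Q * H1) p 0 L p $$ (r - p, s) = 0" using QR1 that mp by simp
    then show ?thesis using that mp by simp
  qed
  have QZW: "(Q * (H1 * W - E * S0)) $$ (r,b) = (if r < p then (R * W) $$ (r,b) - QES $$ (r,b) else - QES $$ (r,b))"
    if W: "W \<in> carrier_mat p L" and r: "r < m" and b: "b < L" for W r b
  proof -
    have H1W: "H1 * W \<in> carrier_mat m L" by (rule mult_carrier_mat[OF H1c W])
    have e1: "Q * (H1 * W - E * S0) = Q * (H1 * W) - Q * (E * S0)" by (rule mult_minus_distrib_mat[OF Qc H1W ES])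
    have e2: "Q * (H1 * W) = (Q * H1) * W" by (rule assoc_mult_mat[OF Qc H1c W, symmetric])
    have e3: "Q * (E * S0) = QES" unfolding QES_def by (rule assoc_mult_mat[OF Qc Ec S0c, symmetric])
    have QH1W: "(Q * H1) * W \<in> carrier_mat m L" by (rule mult_carrier_mat[OF QH1 W])
    have "(Q * (H1 * W - E * S0)) $$ (r,b) = ((Q * H1) * W) $$ (r,b) - QES $$ (r,b)"
      unfolding e1 e2 e3 using r b carrier_matD[OF QH1W] carrier_matD[OF QESc] by simp
    also have "((Q * H1) * W) $$ (r,b) = (\<Sum>s<p. (Q * H1) $$ (r,s) * W $$ (s,b))"
      by (rule mult_index_sum[OF QH1 W r b])
    also have "\<dots> = (if r < p then (R * W) $$ (r,b) else 0)"
    proof (cases "r < p")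
      case True
      have "(\<Sum>s<p. (Q * H1) $$ (r,s) * W $$ (s,b)) = (\<Sum>s<p. R $$ (r,s) * W $$ (s,b))"
        by (rule sum.cong[OF refl], insert True, simp add: R_def)
      also have "\<dots> = (R * W) $$ (r,b)" by (rule mult_index_sum[OF Rc W True b, symmetric])
      finally show ?thesis using True by simp
    next
      case False
      then show ?thesis using QH1z r by simp
    qed
    finally show ?thesis by simp
  qed
  define G where "G = blk QES 0 0 p L"
  define Y' where "Y' = R' * G"
  have Gc: "G \<in> carrier_mat p L" unfolding G_def by simp
  have Y'c: "Y' \<in> carrier_mat p L" unfolding Y'_def by (rule mult_carrier_mat[OF R'(1) Gc])
  have RY': "R * Y' = G"
  proof -
    have "R * Y' = (R * R') * G" unfolding Y'_def by (rule assoc_mult_mat[OF Rc R'(1) Gc, symmetric])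
    then show ?thesis using R'(2) Gc by simp
  qed
  have Yc: "Y \<in> carrier_mat p L" using Y_dim unfolding p_def .
  define Z0 where "Z0 = H1 * Y - E * S0"
  define Z0' where "Z0' = H1 * Y' - E * S0"
  have Z0c: "Z0 \<in> carrier_mat m L" unfolding Z0_def by (rule minus_carrier_mat[OF ES])
  have Z0'c: "Z0' \<in> carrier_mat m L" unfolding Z0'_def by (rule minus_carrier_mat[OF ES])
  have minim: "fsq Z0 \<le> fsq Z0'"
  proof -
    have "fro_norm Z0 \<le> fro_norm Z0'"
      using Y_min Y'c unfolding Z0_def Z0'_def H1_def E_def m_def p_def by blast
    then show ?thesis unfolding fro_le_iff .
  qed
  define QZ where "QZ = Q * Z0"
  define QZ' where "QZ' = Q * Z0'"
  have QZc: "QZ \<in> carrier_mat m L" unfolding QZ_def by (rule mult_carrier_mat[OF Qc Z0c])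
  have QZ'c: "QZ' \<in> carrier_mat m L" unfolding QZ'_def by (rule mult_carrier_mat[OF Qc Z0'c])
  have QZi: "QZ $$ (r,b) = (if r < p then (R * Y) $$ (r,b) - QES $$ (r,b) else - QES $$ (r,b))"
    if "r < m" "b < L" for r b unfolding QZ_def Z0_def by (rule QZW[OF Yc that])
  have QZ'i: "QZ' $$ (r,b) = (if r < p then 0 else - QES $$ (r,b))"
    if "r < m" "b < L" for r b
  proof -
    have "QZ' $$ (r,b) = (if r < p then (R * Y') $$ (r,b) - QES $$ (r,b) else - QES $$ (r,b))"
      unfolding QZ'_def Z0'_def by (rule QZW[OF Y'c that])
    then show ?thesis unfolding RY' G_def using that by simp
  qed
  define rs where "rs X r = (\<Sum>b<L. (cmod (X $$ (r,b)))\<^sup>2)" for X r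
  have fsq_split: "fsq X = (\<Sum>r<p. rs X r) + (\<Sum>r\<in>{p..<m}. rs X r)" if X: "X \<in> carrier_mat m L" for X
  proof -
    have "fsq X = (\<Sum>r<m. rs X r)" unfolding fsq_def rs_def using carrier_matD[OF X] by simp
    also have "\<dots> = (\<Sum>r<p. rs X r) + (\<Sum>r\<in>{p..<m}. rs X r)"
      using pm by (metis atLeast0LessThan sum.atLeastLessThan_concat zero_le)
    finally show ?thesis .
  qed
  have hi_eq: "(\<Sum>r\<in>{p..<m}. rs QZ r) = (\<Sum>r\<in>{p..<m}. rs QZ' r)"
  proof (rule sum.cong[OF refl])
    fix r assume r: "r \<in> {p..<m}"
    show "rs QZ r = rs QZ' r" unfolding rs_def
      by (rule sum.cong[OF refl], insert r, simp add: QZi QZ'i)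
  qed
  have lo0: "(\<Sum>r<p. rs QZ' r) = 0"
    unfolding rs_def by (rule sum.neutral, insert pm, auto simp: QZ'i)
  have "fsq QZ \<le> fsq QZ'"
    using minim isom_fsq[OF isomQ Z0c] isom_fsq[OF isomQ Z0'c] unfolding QZ_def QZ'_def by simp
  then have "(\<Sum>r<p. rs QZ r) \<le> 0"
    unfolding fsq_split[OF QZc] fsq_split[OF QZ'c] hi_eq lo0 by simp
  moreover have rs_nn: "\<And>r. 0 \<le> rs QZ r" unfolding rs_def by (intro sum_nonneg) auto
  ultimately have "(\<Sum>r<p. rs QZ r) = 0" by (meson antisym sum_nonneg)
  then have "\<forall>r\<in>{..<p}. rs QZ r = 0" using rs_nn by (simp add: sum_nonneg_eq_0_iff)
  then have QZlo: "QZ $$ (r,b) = 0" if "r < p" "b < L" for r b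
  proof -
    have "rs QZ r = 0" using that \<open>\<forall>r\<in>{..<p}. rs QZ r = 0\<close> by simp
    then have "\<forall>b\<in>{..<L}. (cmod (QZ $$ (r,b)))\<^sup>2 = 0" unfolding rs_def by (simp add: sum_nonneg_eq_0_iff)
    then show ?thesis using that by simp
  qed
  define Wm where "Wm = blk W 0 0 n m"
  define Wp where "Wp = blk W 0 0 n p"
  have Wmc: "Wm \<in> carrier_mat n m" unfolding Wm_def by simp
  have Wpc: "Wp \<in> carrier_mat n p" unfolding Wp_def by simp
  have Ac: "A \<in> carrier_mat n n" by (rule A_dim)
  have Wc: "W \<in> carrier_mat n M" using W_dim unfolding M_def .
  have AWp: "A * Wp = Wm * H1"
  proof (rule eq_matI)
    fix a c assume "a < dim_row (Wm * H1)" "c < dim_col (Wm * H1)"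
    then have a: "a < n" and c: "c < p" using Wmc H1c by auto
    have cm: "c < m" using c pm by simp
    have "(A * Wp) $$ (a,c) = (\<Sum>t<n. A $$ (a,t) * Wp $$ (t,c))" by (rule mult_index_sum[OF Ac Wpc a c])
    also have "\<dots> = (\<Sum>t<n. A $$ (a,t) * Wm $$ (t,c))"
      by (rule sum.cong[OF refl], insert c cm, simp add: Wp_def Wm_def)
    also have "\<dots> = (A * Wm) $$ (a,c)" by (rule mult_index_sum[OF Ac Wmc a cm, symmetric])
    also have "A * Wm = W * Hbar" using arnoldi unfolding Wm_def m_def .
    also have "(W * Hbar) $$ (a,c) = (\<Sum>s<M. W $$ (a,s) * Hbar $$ (s,c))" by (rule mult_index_sum[OF Wc Hbc a cm])
    also have "\<dots> = (\<Sum>s<m. W $$ (a,s) * Hbar $$ (s,c))"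
      by (rule sum_split_lt[OF mM], insert hz c, simp)
    also have "\<dots> = (\<Sum>s<m. Wm $$ (a,s) * H1 $$ (s,c))"
      by (rule sum.cong[OF refl], insert a c, simp add: Wm_def H1_def)
    also have "\<dots> = (Wm * H1) $$ (a,c)" by (rule mult_index_sum[OF Wmc H1c a c, symmetric])
    finally show "(A * Wp) $$ (a,c) = (Wm * H1) $$ (a,c)" .
  next
    show "dim_row (A * Wp) = dim_row (Wm * H1)" using carrier_matD[OF Ac] carrier_matD[OF Wmc] by simp
    show "dim_col (A * Wp) = dim_col (Wm * H1)" using carrier_matD[OF Wpc] carrier_matD[OF H1c] by simp
  qed
  have V1E: "V1 = Wm * E"
  proof (rule eq_matI)
    fix a b assume "a < dim_row (Wm * E)" "b < dim_col (Wm * E)"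
    then have a: "a < n" and b: "b < L" using Wmc Ec by auto
    have bm: "b < m" using b mp by simp
    have "(Wm * E) $$ (a,b) = (\<Sum>s<m. Wm $$ (a,s) * E $$ (s,b))" by (rule mult_index_sum[OF Wmc Ec a b])
    also have "\<dots> = (\<Sum>s<m. Wm $$ (a,s) * (if s = b then 1 else 0))"
    proof (rule sum.cong[OF refl])
      fix s assume "s \<in> {..<m}"
      then have s: "s < j * L" and bj: "b < j * L" using bm unfolding m_def by auto
      have "E $$ (s,b) = 1\<^sub>m (j * L) $$ (s,b)" unfolding E_def Emat_def using s b by simp
      also have "\<dots> = (if s = b then 1 else 0)" using s bj by simp
      finally show "Wm $$ (a,s) * E $$ (s,b) = Wm $$ (a,s) * (if s = b then 1 else 0)" by simp
    qed
    also have "\<dots> = Wm $$ (a,b)" using bm by simp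
    also have "\<dots> = W $$ (a,b)" using bm a by (simp add: Wm_def)
    also have "W $$ (a,b) = blk W 0 0 n L $$ (a,b)" using a b by simp
    also have "\<dots> = V1 $$ (a,b)" unfolding W_first ..
    finally show "V1 $$ (a,b) = (Wm * E) $$ (a,b)" by simp
  next
    show "dim_row V1 = dim_row (Wm * E)" using carrier_matD[OF V1_dim] carrier_matD[OF Wmc] by simp
    show "dim_col V1 = dim_col (Wm * E)" using carrier_matD[OF V1_dim] carrier_matD[OF Ec] by simp
  qed
  define Fres where "Fres = B - A * (X0 + Wp * Y)"
  have WpY: "Wp * Y \<in> carrier_mat n L" by (rule mult_carrier_mat[OF Wpc Yc])
  have AX0: "A * X0 \<in> carrier_mat n L" by (rule mult_carrier_mat[OF Ac X0_dim])
  have AWpY: "A * (Wp * Y) \<in> carrier_mat n L" by (rule mult_carrier_mat[OF Ac WpY])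
  have H1Y: "H1 * Y \<in> carrier_mat m L" by (rule mult_carrier_mat[OF H1c Yc])
  have FresW: "Fres = Wm * (E * S0 - H1 * Y)"
  proof -
    have "Fres = B - (A * X0 + A * (Wp * Y))" unfolding Fres_def by (simp only: mult_add_distrib_mat[OF Ac X0_dim WpY])
    also have "\<dots> = (B - A * X0) - A * (Wp * Y)" by (rule mat_minus_add[OF B_dim AX0 AWpY])
    also have "B - A * X0 = V1 * S0" by (rule QR0)
    also have "V1 * S0 = Wm * (E * S0)" unfolding V1E by (rule assoc_mult_mat[OF Wmc Ec S0c])
    also have "A * (Wp * Y) = Wm * (H1 * Y)"
      by (simp only: assoc_mult_mat[OF Ac Wpc Yc, symmetric] AWp assoc_mult_mat[OF Wmc H1c Yc])
    also have "Wm * (E * S0) - Wm * (H1 * Y) = Wm * (E * S0 - H1 * Y)"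
      by (rule mult_minus_distrib_mat[OF Wmc ES H1Y, symmetric])
    finally show ?thesis .
  qed
  have Fresc: "Fres \<in> carrier_mat n L" unfolding FresW by (rule mult_carrier_mat[OF Wmc minus_carrier_mat[OF H1Y]])
  have Fres_inj: "inj_mat Fres"
    by (rule mrank_full_inj[OF Fresc], use F_rank in \<open>simp add: Fres_def Wp_def p_def\<close>)
  have Ctc: "Ct \<in> carrier_mat L L" unfolding Ct_def by simp
  have Ct_inj: "v = 0\<^sub>v L" if v: "v \<in> carrier_vec L" and Cv: "Ct *\<^sub>v v = 0\<^sub>v L" for v
  proof -
    have QZv: "QZ *\<^sub>v v = 0\<^sub>v m"
    proof (rule eq_vecI)
      fix r assume "r < dim_vec (0\<^sub>v m)"
      then have r: "r < m" by simp
      have "(QZ *\<^sub>v v) $ r = (\<Sum>b<L. QZ $$ (r,b) * v $ b)" by (rule mat_vec_index_sum[OF QZc v r])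
      also have "\<dots> = 0"
      proof (cases "r < p")
        case True
        then show ?thesis using QZlo by simp
      next
        case False
        have rp: "r - p < L" using r False mp by simp
        have "(\<Sum>b<L. QZ $$ (r,b) * v $ b) = (\<Sum>b<L. - (Ct $$ (r - p,b) * v $ b))"
        proof (rule sum.cong[OF refl])
          fix b assume "b \<in> {..<L}"
          then have b: "b < L" by simp
          have "QZ $$ (r,b) = - QES $$ (r,b)" using QZi[OF r b] False by simp
          also have "QES $$ (r,b) = Ct $$ (r - p, b)" unfolding Ct_def using rp b False by simp
          finally show "QZ $$ (r,b) * v $ b = - (Ct $$ (r - p,b) * v $ b)" by simp
        qed
        also have "\<dots> = - (\<Sum>b<L. Ct $$ (r - p,b) * v $ b)" by (rule sum_negf)
        also have "(\<Sum>b<L. Ct $$ (r - p,b) * v $ b) = (Ct *\<^sub>v v) $ (r - p)"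
          by (rule mat_vec_index_sum[OF Ctc v rp, symmetric])
        also have "\<dots> = 0" using Cv rp by simp
        finally show ?thesis by simp
      qed
      finally show "(QZ *\<^sub>v v) $ r = 0\<^sub>v m $ r" using r by simp
    qed (use QZc in simp)
    have Z0v: "Z0 *\<^sub>v v = 0\<^sub>v m"
    proof -
      have "mat_adjoint Q * QZ = Z0"
        unfolding QZ_def by (simp only: assoc_mult_mat[OF QHc Qc Z0c, symmetric] QHQ left_mult_one_mat[OF Z0c])
      then have "Z0 *\<^sub>v v = mat_adjoint Q *\<^sub>v (QZ *\<^sub>v v)" using assoc_mult_mat_vec[OF QHc QZc v] by simp
      then show ?thesis unfolding QZv using QHc by simp
    qed
    have D: "E * S0 - H1 * Y = - Z0"
    proof (rule eq_matI)
      fix i k assume "i < dim_row (- Z0)" "k < dim_col (- Z0)"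
      then have ik: "i < m" "k < L" using carrier_matD[OF Z0c] by auto
      show "(E * S0 - H1 * Y) $$ (i,k) = (- Z0) $$ (i,k)"
        unfolding Z0_def using ik carrier_matD[OF ES] carrier_matD[OF H1Y] by simp
    next
      show "dim_row (E * S0 - H1 * Y) = dim_row (- Z0)" using carrier_matD[OF ES] carrier_matD[OF Z0c] carrier_matD[OF H1Y] by simp
      show "dim_col (E * S0 - H1 * Y) = dim_col (- Z0)" using carrier_matD[OF ES] carrier_matD[OF Z0c] carrier_matD[OF H1Y] by simp
    qed
    have "Fres *\<^sub>v v = Wm *\<^sub>v ((E * S0 - H1 * Y) *\<^sub>v v)"
      unfolding FresW by (rule assoc_mult_mat_vec[OF Wmc minus_carrier_mat[OF H1Y] v])
    also have "(E * S0 - H1 * Y) *\<^sub>v v = - (Z0 *\<^sub>v v)" unfolding D using Z0c v by simp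
    also have "\<dots> = 0\<^sub>v m" unfolding Z0v by simp
    also have "Wm *\<^sub>v 0\<^sub>v m = 0\<^sub>v n" using Wmc by simp
    finally have "Fres *\<^sub>v v = 0\<^sub>v n" .
    then show ?thesis using Fres_inj v Fresc unfolding inj_mat_def by simp
  qed
  have dCt: "det Ct \<noteq> 0"
  proof
    assume "det Ct = 0"
    then obtain v where "v \<in> carrier_vec L" "v \<noteq> 0\<^sub>v L" "Ct *\<^sub>v v = 0\<^sub>v L"
      using det_0_iff_vec_prod_zero_field[OF Ctc] by blast
    then show False using Ct_inj by blast
  qed
  obtain Ct' where Ct': "Ct' \<in> carrier_mat L L" "Ct * Ct' = 1\<^sub>m L" using det_nz_inv[OF Ctc dCt] by blast
  define K where "K = Q' * Hbar"
  have Kc: "K \<in> carrier_mat M m" unfolding K_def by (rule mult_carrier_mat[OF Q'c Hbc])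
  have P2K: "P2 = Qe * K" unfolding P2_def K_def ..
  have P2c: "P2 \<in> carrier_mat M m" unfolding P2K by (rule mult_carrier_mat[OF Qec Kc])
  define S where "S = blk K p p (2 * L) L"
  have Sc: "S \<in> carrier_mat (2 * L) L" unfolding S_def by simp
  have L2: "p + 2 * L = M" using mp Mm by simp
  have OmS: "(Om j * S) $$ (a,b) = P2 $$ (p + a, p + b)" if a: "a < 2 * L" and b: "b < L" for a b
  proof -
    have Kc': "K \<in> carrier_mat ((j + 1) * L) m" using Kc unfolding M_def .
    have pb: "p + b < m" using b mp by simp
    have "P2 $$ (p + a, p + b) = (Qembed Om L j (j + 1) * K) $$ (p + a, p + b)" unfolding P2K Qe_def ..
    also have "\<dots> = (\<Sum>t<2*L. Om j $$ (p + a - (j - 1) * L, t) * K $$ ((j - 1) * L + t, p + b))"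
      by (rule Qembed_mult_index[OF _ _ Kc'], insert j_ge a pb, auto simp: p_def)
    also have "\<dots> = (\<Sum>t<2*L. Om j $$ (a, t) * S $$ (t, b))"
      by (rule sum.cong[OF refl], insert b, simp add: S_def p_def)
    also have "\<dots> = (Om j * S) $$ (a,b)" by (rule mult_index_sum[OF Omc Sc a b, symmetric])
    finally show ?thesis by simp
  qed
  define Rj where "Rj = blk P2 0 0 m m"
  have Rjc: "Rj \<in> carrier_mat m m" unfolding Rj_def by simp
  define Nm where "Nm = blk P2 p p L L"
  have Nmc: "Nm \<in> carrier_mat L L" unfolding Nm_def by simp
  have NmRj: "Nm $$ (a,b) = Rj $$ (p + a, p + b)" if "a < L" "b < L" for a b
    unfolding Nm_def Rj_def using that mp by simp
  have Nm_ut: "upper_triangular Nm"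
  proof (rule upper_triangularI)
    fix a b assume ab: "b < a" "a < dim_row Nm"
    then have a: "a < L" and b: "b < L" using Nmc by auto
    have "Rj $$ (p + a, p + b) = 0"
      using QR2 ab a mp unfolding Rj_def[symmetric] by (intro upper_triangularD[of Rj]) (auto simp: Rj_def)
    then show "Nm $$ (a,b) = 0" using NmRj[OF a b] by simp
  qed
  have dNm: "det Nm \<noteq> 0"
  proof (rule ut_det_nz[OF Nm_ut Nmc])
    fix a assume a: "a < L"
    have "Rj $$ (p + a, p + a) \<noteq> 0"
      by (rule ut_det_diag[OF _ Rjc], insert QR2 a mp, auto simp: Rj_def)
    then show "Nm $$ (a,a) \<noteq> 0" using NmRj[OF a a] by simp
  qed
  obtain Nm' where Nm': "Nm' \<in> carrier_mat L L" "Nm * Nm' = 1\<^sub>m L" using det_nz_inv[OF Nmc dNm] by blast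
  have OmSz: "(Om j * S) $$ (a,b) = 0" if "L \<le> a" "a < 2 * L" "b < L" for a b
  proof -
    have "blk P2 m 0 L m $$ (a - L, p + b) = 0" using QR2 that mp by simp
    then have "P2 $$ (m + (a - L), p + b) = 0" using that mp by simp
    moreover have "m + (a - L) = p + a" using that mp by simp
    ultimately show ?thesis using OmS that by simp
  qed
  have OmN: "(Om j * S) $$ (a,b) = Nm $$ (a,b)" if "a < L" "b < L" for a b
    using OmS[of a b] that unfolding Nm_def by simp
  have OmHc: "mat_adjoint (Om j) \<in> carrier_mat (2 * L) (2 * L)" using adj_carrier[of "Om j"] carrier_matD[OF Omc] by simp
  have OmSc: "Om j * S \<in> carrier_mat (2 * L) L" by (rule mult_carrier_mat[OF Omc Sc])
  have SOS: "S = mat_adjoint (Om j) * (Om j * S)"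
    by (simp only: assoc_mult_mat[OF OmHc Omc Sc, symmetric] OmH left_mult_one_mat[OF Sc])
  have Q11c: "Q11 \<in> carrier_mat L L" unfolding Q11_def by simp
  have Q11H: "mat_adjoint Q11 \<in> carrier_mat L L" using adj_carrier[of Q11] carrier_matD[OF Q11c] by simp
  have Hh_eq: "Hh = mat_adjoint Q11 * Nm"
  proof (rule eq_matI)
    fix a b assume "a < dim_row (mat_adjoint Q11 * Nm)" "b < dim_col (mat_adjoint Q11 * Nm)"
    then have a: "a < L" and b: "b < L" using Q11H Nmc by auto
    have a2: "a < 2 * L" using a by simp
    have "Hh $$ (a,b) = K $$ (p + a, p + b)" unfolding Hh_def K_def using a b by simp
    also have "\<dots> = S $$ (a,b)" unfolding S_def using a b by simp
    also have "\<dots> = (mat_adjoint (Om j) * (Om j * S)) $$ (a,b)" using SOS by simp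
    also have "\<dots> = (\<Sum>t<2*L. mat_adjoint (Om j) $$ (a,t) * (Om j * S) $$ (t,b))"
      by (rule mult_index_sum[OF OmHc OmSc a2 b])
    also have "\<dots> = (\<Sum>t<L. mat_adjoint (Om j) $$ (a,t) * (Om j * S) $$ (t,b))"
      by (rule sum_split_lt, simp, insert OmSz b, simp)
    also have "\<dots> = (\<Sum>t<L. mat_adjoint Q11 $$ (a,t) * Nm $$ (t,b))"
    proof (rule sum.cong[OF refl])
      fix t assume "t \<in> {..<L}"
      then have t: "t < L" by simp
      have "mat_adjoint (Om j) $$ (a,t) = cnj (Om j $$ (t,a))" using a t carrier_matD[OF Omc] by simp
      also have "\<dots> = mat_adjoint Q11 $$ (a,t)" using a t by (simp add: Q11_def)
      finally show "mat_adjoint (Om j) $$ (a,t) * (Om j * S) $$ (t,b) = mat_adjoint Q11 $$ (a,t) * Nm $$ (t,b)"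
        using OmN[OF t b] by simp
    qed
    also have "\<dots> = (mat_adjoint Q11 * Nm) $$ (a,b)" by (rule mult_index_sum[OF Q11H Nmc a b, symmetric])
    finally show "Hh $$ (a,b) = (mat_adjoint Q11 * Nm) $$ (a,b)" .
  next
    show "dim_row Hh = dim_row (mat_adjoint Q11 * Nm)" using carrier_matD[OF Q11H] by (simp add: Hh_def)
    show "dim_col Hh = dim_col (mat_adjoint Q11 * Nm)" using carrier_matD[OF Nmc] by (simp add: Hh_def)
  qed
  have "mrank Hh = mrank (mat_adjoint Q11)" unfolding Hh_eq by (rule mrank_right_inv[OF Q11H Nmc Nm'])
  also have "\<dots> = mrank Q11" by (rule mrank_adj)
  finally have rHh: "mrank Hh = mrank Q11" .
  have rC: "mrank C = mrank Q11" unfolding C_def by (rule mrank_right_inv[OF Q11c Ctc Ct'])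
  have part2: "mrank C = mrank Hh" using rHh rC by simp
  show ?thesis
    unfolding Let_def
    using part1 part2
    unfolding Hh_def C_def Ct_def QES_def Q11_def Q'_def Q_def E_def Hj_def p_def m_def
    by simp
qed


end
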